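(* Let $V$ be an abelian intertwining algebra associated to an abelian group $A$ with normalized abelian $3$-cocycle $(F,\Omega)$. If $z_1,z_2\in\mathbb C^\times$ satisfy $|z_1|>|z_2|>|z_1-z_2|>0$, then $$\langle v',Y(Y(v_1,e^{\log(z_1-z_2)})v_2,e^{\log z_2})v_3\rangle=\mathcal A_{z_1,z_2}(\alpha_1,\alpha_2,\alpha_3)\,\langle v',Y(v_1,e^{\log z_1})Y(v_2,e^{\log z_2})v_3\rangle,$$ where $$\mathcal A_{z_1,z_2}(\alpha_1,\alpha_2,\alpha_3)=\big(\Omega(\alpha_1,\alpha_2)\Omega(\alpha_2,\alpha_1)\big)^{-p_{z_1,z_2}}\big(\Omega(\alpha_1,\alpha_3)\Omega(\alpha_3,\alpha_1)\big)^{p_{z_2,z_2-z_1}}F(\alpha_1,\alpha_2,\alpha_3)^{-1},$$ for any $v_1\in V^{\alpha_1}$, $v_2\in V^{\alpha_2}$, $v_3\in V^{\alpha_3}$, and $v'\in V'$.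
   Context: Normalized abelian $3$-cocycle $(F,\Omega)$: $F:A^3\to\mathbb C^\times$, $\Omega:A^2\to\mathbb C^\times$ satisfying the pentagon identity $F(\alpha_1,\alpha_2,\alpha_3)F(\alpha_1,\alpha_2+\alpha_3,\alpha_4)F(\alpha_2,\alpha_3,\alpha_4)=F(\alpha_1,\alpha_2,\alpha_3+\alpha_4)F(\alpha_1+\alpha_2,\alpha_3,\alpha_4)$, the hexagon identities $F(\alpha_1,\alpha_2,\alpha_3)\Omega(\alpha_1+\alpha_2,\alpha_3)F(\alpha_3,\alpha_1,\alpha_2)=\Omega(\alpha_2,\alpha_3)F(\alpha_1,\alpha_3,\alpha_2)\Omega(\alpha_1,\alpha_3)$ and $F(\alpha_1,\alpha_2,\alpha_3)^{-1}\Omega(\alpha_1,\alpha_2+\alpha_3)F(\alpha_2,\alpha_3,\alpha_1)^{-1}=\Omega(\alpha_1,\alpha_2)F(\alpha_2,\alpha_1,\alpha_3)^{-1}\Omega(\alpha_1,\alpha_3)$, and $F=1$ if any argument is $0$. Fix $\hat b:A^2\to\mathbb C$ with $e^{2\pi i\hat b(\alpha_1,\alpha_2)}=\Omega(\alpha_1,\alpha_2)\Omega(\alpha_2,\alpha_1)$ and set $B(\alpha_1,\alpha_2,\alpha_3)=F(\alpha_1,\alpha_2,\alpha_3)\Omega(\alpha_1,\alpha_2)F(\alpha_2,\alpha_1,\alpha_3)^{-1}$. Abelian intertwining algebra associated to $(A,F,\Omega)$: $A\times\mathbb C$-graded $V=\bigoplus V^\alpha_{(n)}$ (grading restricted: for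 each $\alpha$, $R$, only finitely many nonzero $V^\alpha_{(n)}$ with $\mathrm{Re}\,n\le R$), $Y(v,x)=\sum_{n\in\mathbb C}v_nx^{-n-1}$, $\mathbf 1\in V^0_{(0)}$, $\omega\in V^0_{(2)}$, with $x^{\hat b(\alpha_1,\alpha_2)}Y(v_1,x)v_2\in V^{\alpha_1+\alpha_2}((x))$ for $v_i\in V^{\alpha_i}$; vacuum and creation properties; the Jacobi identity $x_0^{-1}\big(\tfrac{x_1-x_2}{x_0}\big)^{\hat b(\alpha_1,\alpha_2)}\delta\big(\tfrac{x_1-x_2}{x_0}\big)Y(v_1,x_1)Y(v_2,x_2)v_3-B(\alpha_1,\alpha_2,\alpha_3)x_0^{-1}\big(\tfrac{x_2-x_1}{e^{\pi i}x_0}\big)^{\hat b(\alpha_1,\alpha_2)}\delta\big(\tfrac{x_2-x_1}{-x_0}\big)Y(v_2,x_2)Y(v_1,x_1)v_3=F(\alpha_1,\alpha_2,\alpha_3)x_1^{-1}\big(\tfrac{x_2+x_0}{x_1}\big)^{\hat b(\alpha_1,\alpha_3)}\delta\big(\tfrac{x_2+x_0}{x_1}\big)Y(Y(v_1,x_0)v_2,x_2)v_3$; Virasoro relations for $Y(\omega,x)=\sum L(n)x^{-n-2}$ with $V_{(n)}$ the $L(0)$-eigenspace; $L(-1)$-derivative property. $V'=\bigoplus_{\alpha,n}(V^\alpha_{(n)})^*$ is the graded dual with pairing $\langle\cdot,\cdot\rangle$; both sides of the identity are absolutely convergent sums over conformal weights. $\log z=\log|z|+i\arg z$ with $0\le\arg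 z<2\pi$, and complex powers $e^{s\log z}$ are used when substituting into $Y$. For $|z_1|>|z_2|$, the integer $p_{z_1,z_2}$ is defined by $\log(z_1-z_2)=\log z_1+\log(1-z_2/z_1)+2\pi i\,p_{z_1,z_2}$, where $\log(1-z_2/z_1)$ is the standard power series of $\log(1-x)$ at $x=z_2/z_1$. *)

theory Defs
  imports "HOL-Analysis.Analysis"
begin

definition abelian_3cocycle ::
  "('a::ab_group_add \<Rightarrow> 'a \<Rightarrow> 'a \<Rightarrow> complex) \<Rightarrow> ('a \<Rightarrow> 'a \<Rightarrow> complex) \<Rightarrow> bool" where
  "abelian_3cocycle F Om \<longleftrightarrow>
     (\<forall>a b c. F a b c \<noteq> 0) \<and> (\<forall>a b. Om a b \<noteq> 0) \<and>
     (\<forall>a1 a2 a3 a4. F a1 a2 a3 * F a1 (a2 + a3) a4 * F a2 a3 a4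
                     = F a1 a2 (a3 + a4) * F (a1 + a2) a3 a4) \<and>
     (\<forall>a1 a2 a3. F a1 a2 a3 * Om (a1 + a2) a3 * F a3 a1 a2
                  = Om a2 a3 * F a1 a3 a2 * Om a1 a3) \<and>
     (\<forall>a1 a2 a3. inverse (F a1 a2 a3) * Om a1 (a2 + a3) * inverse (F a2 a3 a1)
                  = Om a1 a2 * inverse (F a2 a1 a3) * Om a1 a3) \<and>
     (\<forall>a b. F 0 a b = 1 \<and> F a 0 b = 1 \<and> F a b 0 = 1)"

definition Bfac :: "('a \<Rightarrow> 'a \<Rightarrow> 'a \<Rightarrow> complex) \<Rightarrow> ('a \<Rightarrow> 'a \<Rightarrow> complex) \<Rightarrow> 'a \<Rightarrow> 'a \<Rightarrow> 'a \<Rightarrow> complex" where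
  "Bfac F Om a1 a2 a3 = F a1 a2 a3 * Om a1 a2 * inverse (F a2 a1 a3)"

definition fsum :: "('i \<Rightarrow> 'b::comm_monoid_add) \<Rightarrow> 'b" where
  "fsum f = sum f {i. f i \<noteq> 0}"

text \<open>V is a complex vector space (type 'v with scalar multiplication sc);
  Vh a n is the homogeneous subspace V^a_(n).\<close>

definition decomp ::
  "('a \<Rightarrow> complex \<Rightarrow> 'v::ab_group_add set) \<Rightarrow> 'v \<Rightarrow> ('a \<times> complex \<Rightarrow> 'v) \<Rightarrow> bool" where
  "decomp Vh v c \<longleftrightarrow> finite {p. c p \<noteq> 0} \<and> (\<forall>p. c p \<in> Vh (fst p) (snd p))
                        \<and> v = sum c {p. c p \<noteq> 0}"

definition graded_space ::
  "(complex \<Rightarrow> 'v::ab_group_add \<Rightarrow> 'v) \<Rightarrow> ('a \<Rightarrow> complex \<Rightarrow> 'v set) \<Rightarrow> bool" where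
  "graded_space sc Vh \<longleftrightarrow> vector_space sc \<and> (\<forall>a n. module.subspace sc (Vh a n))
      \<and> (\<forall>v. \<exists>!c. decomp Vh v c)"

definition comp :: "('a \<Rightarrow> complex \<Rightarrow> 'v::ab_group_add set) \<Rightarrow> 'v \<Rightarrow> 'a \<Rightarrow> complex \<Rightarrow> 'v" where
  "comp Vh v a n = (THE c. decomp Vh v c) (a, n)"

definition wtproj :: "('a \<Rightarrow> complex \<Rightarrow> 'v::ab_group_add set) \<Rightarrow> complex \<Rightarrow> 'v \<Rightarrow> 'v" where
  "wtproj Vh n v = fsum (\<lambda>a. comp Vh v a n)"

definition Vgr :: "(complex \<Rightarrow> 'v::ab_group_add \<Rightarrow> 'v) \<Rightarrow> ('a \<Rightarrow> complex \<Rightarrow> 'v set) \<Rightarrow> 'a \<Rightarrow> 'v set" where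
  "Vgr sc Vh a = module.span sc (\<Union>n. Vh a n)"

text \<open>Elements of the graded dual V' = direct sum of (V^a_(n))^*, viewed as
  linear functionals on V vanishing on all but finitely many V^a_(n).\<close>
definition graded_dual ::
  "(complex \<Rightarrow> 'v::ab_group_add \<Rightarrow> 'v) \<Rightarrow> ('a \<Rightarrow> complex \<Rightarrow> 'v set) \<Rightarrow> ('v \<Rightarrow> complex) \<Rightarrow> bool" where
  "graded_dual sc Vh f \<longleftrightarrow> (\<forall>x y. f (x + y) = f x + f y) \<and> (\<forall>c x. f (sc c x) = c * f x)
      \<and> finite {(a, n). \<exists>w\<in>Vh a n. f w \<noteq> 0}"

section \<open>Abelian intertwining algebras\<close>

text \<open>md v k w is the mode v_k w, so that Y(v,x) w = \<Sum>_k (v_k w) x^(-k-1).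
  The Jacobi identity is stated componentwise: the coefficient of
  x0^(-l-b-1) x1^(-m-1) x2^(-k-1) (l integer, m,k complex), obtained by expanding
  the three (generalized) delta-function terms.\<close>

definition AIA ::
  "(complex \<Rightarrow> 'v::ab_group_add \<Rightarrow> 'v) \<Rightarrow> ('a::ab_group_add \<Rightarrow> complex \<Rightarrow> 'v set)
   \<Rightarrow> ('v \<Rightarrow> complex \<Rightarrow> 'v \<Rightarrow> 'v) \<Rightarrow> 'v \<Rightarrow> 'v
   \<Rightarrow> ('a \<Rightarrow> 'a \<Rightarrow> 'a \<Rightarrow> complex) \<Rightarrow> ('a \<Rightarrow> 'a \<Rightarrow> complex) \<Rightarrow> ('a \<Rightarrow> 'a \<Rightarrow> complex) \<Rightarrow> bool" where
  "AIA sc Vh md vac om F Om bh \<longleftrightarrow>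
     abelian_3cocycle F Om \<and>
     (\<forall>a b. exp (2 * pi * \<i> * bh a b) = Om a b * Om b a) \<and>
     graded_space sc Vh \<and>
     \<comment> \<open>grading restricted\<close>
     (\<forall>a (R::real). finite {n. Vh a n \<noteq> {0} \<and> Re n \<le> R}) \<and>
     \<comment> \<open>Y is bilinear\<close>
     (\<forall>u v k w. md (u + v) k w = md u k w + md v k w) \<and>
     (\<forall>c v k w. md (sc c v) k w = sc c (md v k w)) \<and>
     (\<forall>v k w w'. md v k (w + w') = md v k w + md v k w') \<and>
     (\<forall>c v k w. md v k (sc c w) = sc c (md v k w)) \<and>
     \<comment> \<open>x^bh(a1,a2) Y(v1,x)v2 lies in V^(a1+a2)((x))\<close>
     (\<forall>a1 a2 v1 v2. v1 \<in> Vgr sc Vh a1 \<longrightarrow> v2 \<in> Vgr sc Vh a2 \<longrightarrow>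
        (\<forall>k. md v1 k v2 \<in> Vgr sc Vh (a1 + a2)) \<and>
        (\<forall>k. k - bh a1 a2 \<notin> \<int> \<longrightarrow> md v1 k v2 = 0) \<and>
        (\<exists>N::real. \<forall>k. k - bh a1 a2 \<in> \<int> \<and> Re (k - bh a1 a2) > N \<longrightarrow> md v1 k v2 = 0)) \<and>
     \<comment> \<open>vacuum\<close>
     vac \<in> Vh 0 0 \<and>
     (\<forall>k w. md vac k w = (if k = -1 then w else 0)) \<and>
     \<comment> \<open>creation: Y(v,x)1 \<in> V[[x]] and its constant term is v\<close>
     (\<forall>v k. (\<forall>j::nat. k \<noteq> - 1 - of_nat j) \<longrightarrow> md v k vac = 0) \<and>
     (\<forall>v. md v (-1) vac = v) \<and>
     \<comment> \<open>conformal vector and Virasoro relations, L(n) = om_(n+1)\<close>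
     om \<in> Vh 0 2 \<and>
     (\<exists>cc::complex. \<forall>(m::int) (n::int) w.
        md om (of_int m + 1) (md om (of_int n + 1) w) - md om (of_int n + 1) (md om (of_int m + 1) w)
        = sc (of_int (m - n)) (md om (of_int (m + n) + 1) w)
          + (if m + n = 0 then sc ((of_int m ^ 3 - of_int m) / 12 * cc) w else 0)) \<and>
     \<comment> \<open>V_(n) is the L(0)-eigenspace with eigenvalue n\<close>
     (\<forall>a n w. w \<in> Vh a n \<longrightarrow> md om 1 w = sc n w) \<and>
     \<comment> \<open>L(-1)-derivative property: Y(L(-1)v,x) = d/dx Y(v,x)\<close>
     (\<forall>v k w. md (md om 0 v) k w = sc (- k) (md v (k - 1) w)) \<and>
     \<comment> \<open>Jacobi identity (componentwise)\<close>
     (\<forall>a1 a2 a3 v1 v2 v3 (l::int) m k.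
        v1 \<in> Vgr sc Vh a1 \<longrightarrow> v2 \<in> Vgr sc Vh a2 \<longrightarrow> v3 \<in> Vgr sc Vh a3 \<longrightarrow>
        (let b = bh a1 a2; c = bh a1 a3 in
          fsum (\<lambda>i::nat. sc ((-1) ^ i * ((of_int l + b) gchoose i))
                  (md v1 (m + of_int l + b - of_nat i) (md v2 (k + of_nat i) v3)))
          - sc (Bfac F Om a1 a2 a3 * exp (- pi * \<i> * b) * (-1) powi l)
              (fsum (\<lambda>i::nat. sc ((-1) ^ i * ((of_int l + b) gchoose i))
                  (md v2 (k + of_int l + b - of_nat i) (md v1 (m + of_nat i) v3))))
          = (if m - c \<in> \<int> then
               sc (F a1 a2 a3) (fsum (\<lambda>j::nat. sc (m gchoose j)
                  (md (md v1 (of_int l + b + of_nat j) v2) (k + m - of_nat j) v3)))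
             else 0)))"

text \<open>log z = log|z| + i arg z with 0 \<le> arg z < 2 pi.\<close>
definition arg0 :: "complex \<Rightarrow> real" where
  "arg0 z = (if 0 \<le> Arg z then Arg z else Arg z + 2 * pi)"

definition lg :: "complex \<Rightarrow> complex" where
  "lg z = complex_of_real (ln (cmod z)) + \<i> * complex_of_real (arg0 z)"

definition cpw :: "complex \<Rightarrow> complex \<Rightarrow> complex" where
  "cpw z s = exp (s * lg z)"

definition log1m_series :: "complex \<Rightarrow> complex" where
  "log1m_series x = - (\<Sum>n. x ^ Suc n / of_nat (Suc n))"

definition pint :: "complex \<Rightarrow> complex \<Rightarrow> int" where
  "pint z1 z2 = (THE p::int. lg (z1 - z2) = lg z1 + log1m_series (z2 / z1) + 2 * pi * \<i> * of_int p)"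

definition Afac ::
  "('a::ab_group_add \<Rightarrow> 'a \<Rightarrow> 'a \<Rightarrow> complex) \<Rightarrow> ('a \<Rightarrow> 'a \<Rightarrow> complex) \<Rightarrow> complex \<Rightarrow> complex
   \<Rightarrow> 'a \<Rightarrow> 'a \<Rightarrow> 'a \<Rightarrow> complex" where
  "Afac F Om z1 z2 a1 a2 a3 =
     (Om a1 a2 * Om a2 a1) powi (- pint z1 z2) * (Om a1 a3 * Om a3 a1) powi (pint z2 (z2 - z1))
     * inverse (F a1 a2 a3)"

section \<open>Matrix coefficients as sums over conformal weights\<close>

text \<open>n-th term of <v', Y(v1,e^log z1) Y(v2,e^log z2) v3>: the product with the
  projection onto V_(n) inserted between the two vertex operators.\<close>
definition prod_term ::
  "('a \<Rightarrow> complex \<Rightarrow> 'v::ab_group_add set) \<Rightarrow> ('v \<Rightarrow> complex \<Rightarrow> 'v \<Rightarrow> 'v) \<Rightarrow> ('v \<Rightarrow> complex)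
   \<Rightarrow> 'v \<Rightarrow> 'v \<Rightarrow> 'v \<Rightarrow> complex \<Rightarrow> complex \<Rightarrow> complex \<Rightarrow> complex" where
  "prod_term Vh md v' v1 v2 v3 z1 z2 n =
     fsum (\<lambda>(m, k). v' (md v1 m (wtproj Vh n (md v2 k v3))) * cpw z1 (- m - 1) * cpw z2 (- k - 1))"

text \<open>n-th term of <v', Y(Y(v1,e^log z0) v2, e^log z2) v3>: the projection onto
  V_(n) applied to Y(v1,e^log z0) v2.\<close>
definition iter_term ::
  "('a \<Rightarrow> complex \<Rightarrow> 'v::ab_group_add set) \<Rightarrow> ('v \<Rightarrow> complex \<Rightarrow> 'v \<Rightarrow> 'v) \<Rightarrow> ('v \<Rightarrow> complex)
   \<Rightarrow> 'v \<Rightarrow> 'v \<Rightarrow> 'v \<Rightarrow> complex \<Rightarrow> complex \<Rightarrow> complex \<Rightarrow> complex" where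
  "iter_term Vh md v' v1 v2 v3 z0 z2 n =
     fsum (\<lambda>(r, s). v' (md (wtproj Vh n (md v1 r v2)) s v3) * cpw z0 (- r - 1) * cpw z2 (- s - 1))"

end

theory Submission
  imports Defs "HOL-Computational_Algebra.Formal_Power_Series"
begin


locale aia =
  fixes sc :: "complex \<Rightarrow> 'v::ab_group_add \<Rightarrow> 'v"
    and Vh :: "'a::ab_group_add \<Rightarrow> complex \<Rightarrow> 'v set"
    and md :: "'v \<Rightarrow> complex \<Rightarrow> 'v \<Rightarrow> 'v"
    and vac om :: 'v
    and F :: "'a \<Rightarrow> 'a \<Rightarrow> 'a \<Rightarrow> complex" and Om bh :: "'a \<Rightarrow> 'a \<Rightarrow> complex"
  assumes AIA: "AIA sc Vh md vac om F Om bh"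
begin

lemma P0: "abelian_3cocycle F Om"
  using AIA unfolding AIA_def by (elim conjE) assumption

lemma P1: "(\<forall>a b. exp (2 * pi * \<i> * bh a b) = Om a b * Om b a)"
  using AIA unfolding AIA_def by (elim conjE) assumption

lemma P2: "graded_space sc Vh"
  using AIA unfolding AIA_def by (elim conjE) assumption

lemma P3: "(\<forall>a (R::real). finite {n. Vh a n \<noteq> {0} \<and> Re n \<le> R})"
  using AIA unfolding AIA_def by (elim conjE) assumption

lemma P4: "(\<forall>u v k w. md (u + v) k w = md u k w + md v k w)"
  using AIA unfolding AIA_def by (elim conjE) assumption

lemma P5: "(\<forall>c v k w. md (sc c v) k w = sc c (md v k w))"
  using AIA unfolding AIA_def by (elim conjE) assumption

lemma P6: "(\<forall>v k w w'. md v k (w + w') = md v k w + md v k w')"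
  using AIA unfolding AIA_def by (elim conjE) assumption

lemma P7: "(\<forall>c v k w. md v k (sc c w) = sc c (md v k w))"
  using AIA unfolding AIA_def by (elim conjE) assumption

lemma P8: "(\<forall>a1 a2 v1 v2. v1 \<in> Vgr sc Vh a1 \<longrightarrow> v2 \<in> Vgr sc Vh a2 \<longrightarrow>
        (\<forall>k. md v1 k v2 \<in> Vgr sc Vh (a1 + a2)) \<and>
        (\<forall>k. k - bh a1 a2 \<notin> \<int> \<longrightarrow> md v1 k v2 = 0) \<and>
        (\<exists>N::real. \<forall>k. k - bh a1 a2 \<in> \<int> \<and> Re (k - bh a1 a2) > N \<longrightarrow> md v1 k v2 = 0))"
  using AIA unfolding AIA_def by (elim conjE) assumption

lemma P9: "vac \<in> Vh 0 0"
  using AIA unfolding AIA_def by (elim conjE) assumption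

lemma P10: "(\<forall>k w. md vac k w = (if k = -1 then w else 0))"
  using AIA unfolding AIA_def by (elim conjE) assumption

lemma P11: "(\<forall>v k. (\<forall>j::nat. k \<noteq> - 1 - of_nat j) \<longrightarrow> md v k vac = 0)"
  using AIA unfolding AIA_def by (elim conjE) assumption

lemma P12: "(\<forall>v. md v (-1) vac = v)"
  using AIA unfolding AIA_def by (elim conjE) assumption

lemma P13: "om \<in> Vh 0 2"
  using AIA unfolding AIA_def by (elim conjE) assumption

lemma P14: "(\<exists>cc::complex. \<forall>(m::int) (n::int) w.
        md om (of_int m + 1) (md om (of_int n + 1) w) - md om (of_int n + 1) (md om (of_int m + 1) w)
        = sc (of_int (m - n)) (md om (of_int (m + n) + 1) w)
          + (if m + n = 0 then sc ((of_int m ^ 3 - of_int m) / 12 * cc) w else 0))"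
  using AIA unfolding AIA_def by (elim conjE) assumption

lemma P15: "(\<forall>a n w. w \<in> Vh a n \<longrightarrow> md om 1 w = sc n w)"
  using AIA unfolding AIA_def by (elim conjE) assumption

lemma P16: "(\<forall>v k w. md (md om 0 v) k w = sc (- k) (md v (k - 1) w))"
  using AIA unfolding AIA_def by (elim conjE) assumption

lemma P17: "(\<forall>a1 a2 a3 v1 v2 v3 (l::int) m k.
        v1 \<in> Vgr sc Vh a1 \<longrightarrow> v2 \<in> Vgr sc Vh a2 \<longrightarrow> v3 \<in> Vgr sc Vh a3 \<longrightarrow>
        (let b = bh a1 a2; c = bh a1 a3 in
          fsum (\<lambda>i::nat. sc ((-1) ^ i * ((of_int l + b) gchoose i))
                  (md v1 (m + of_int l + b - of_nat i) (md v2 (k + of_nat i) v3)))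
          - sc (Bfac F Om a1 a2 a3 * exp (- pi * \<i> * b) * (-1) powi l)
              (fsum (\<lambda>i::nat. sc ((-1) ^ i * ((of_int l + b) gchoose i))
                  (md v2 (k + of_int l + b - of_nat i) (md v1 (m + of_nat i) v3))))
          = (if m - c \<in> \<int> then
               sc (F a1 a2 a3) (fsum (\<lambda>j::nat. sc (m gchoose j)
                  (md (md v1 (of_int l + b + of_nat j) v2) (k + m - of_nat j) v3)))
             else 0)))"
  using AIA unfolding AIA_def by (elim conjE) assumption


end


lemma fsum_eq: "finite S \<Longrightarrow> (\<And>x. x \<notin> S \<Longrightarrow> f x = 0) \<Longrightarrow> fsum f = sum f S"
  unfolding fsum_def by (rule sum.mono_neutral_left) auto

lemma fsum_finite_supp: "finite {x. f x \<noteq> 0} \<Longrightarrow> fsum f = sum f {x. f x \<noteq> 0}"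
  unfolding fsum_def by simp

lemma fsum_zero: "(\<And>x. f x = 0) \<Longrightarrow> fsum f = 0"
  unfolding fsum_def by simp

lemma fsum_single: "(\<And>x. x \<noteq> a \<Longrightarrow> f x = 0) \<Longrightarrow> fsum f = f a"
  by (subst fsum_eq[of "{a}"]) auto

context aia begin

lemma vs: "vector_space sc" using P2 unfolding graded_space_def by blast

sublocale V: vector_space sc by (rule vs)

lemma subsp: "V.subspace (Vh a n)" using P2 unfolding graded_space_def by blast
lemma uniq: "\<exists>!c. decomp Vh v c" using P2 unfolding graded_space_def by blast

definition cp :: "'v \<Rightarrow> 'a \<times> complex \<Rightarrow> 'v" where "cp v = (THE c. decomp Vh v c)"

lemma cp: "decomp Vh v (cp v)" unfolding cp_def by (rule theI'[OF uniq])
lemma cp_eq: "decomp Vh v c \<Longrightarrow> cp v = c" unfolding cp_def by (rule the1_equality[OF uniq])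
lemma comp_cp: "comp Vh v a n = cp v (a, n)" unfolding comp_def cp_def by simp

lemma cp_in: "cp v p \<in> Vh (fst p) (snd p)" using cp unfolding decomp_def by blast
lemma cp_fin: "finite {p. cp v p \<noteq> 0}" using cp unfolding decomp_def by blast
lemma cp_sum_eq: "v = sum (cp v) {p. cp v p \<noteq> 0}" using cp unfolding decomp_def by blast

lemma cp_sum_S: "finite S \<Longrightarrow> {p. cp v p \<noteq> 0} \<subseteq> S \<Longrightarrow> v = sum (cp v) S"
  by (subst cp_sum_eq) (rule sum.mono_neutral_left, auto)

lemma decompI: "finite S \<Longrightarrow> (\<And>p. c p \<in> Vh (fst p) (snd p)) \<Longrightarrow> (\<And>p. p \<notin> S \<Longrightarrow> c p = 0)
   \<Longrightarrow> v = sum c S \<Longrightarrow> decomp Vh v c"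
  unfolding decomp_def
  apply (intro conjI)
    apply (rule finite_subset[of _ S]; auto)
   apply blast
  apply simp
  apply (rule sum.mono_neutral_right, auto)
  done

lemma cp_add: "cp (x + y) = (\<lambda>p. cp x p + cp y p)"
proof (rule cp_eq, rule decompI)
  let ?S = "{p. cp x p \<noteq> 0} \<union> {p. cp y p \<noteq> 0}"
  show "finite ?S" using cp_fin by auto
  show "cp x p + cp y p \<in> Vh (fst p) (snd p)" for p by (rule V.subspace_add[OF subsp cp_in cp_in])
  show "p \<notin> ?S \<Longrightarrow> cp x p + cp y p = 0" for p by auto
  have "x = sum (cp x) ?S" by (rule cp_sum_S) (use cp_fin in auto)
  moreover have "y = sum (cp y) ?S" by (rule cp_sum_S) (use cp_fin in auto)
  ultimately show "x + y = (\<Sum>p\<in>?S. cp x p + cp y p)" by (simp add: sum.distrib)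
qed

lemma cp_sc: "cp (sc c x) = (\<lambda>p. sc c (cp x p))"
proof (rule cp_eq, rule decompI)
  let ?S = "{p. cp x p \<noteq> 0}"
  show "finite ?S" using cp_fin by auto
  show "sc c (cp x p) \<in> Vh (fst p) (snd p)" for p by (rule V.subspace_scale[OF subsp cp_in])
  show "p \<notin> ?S \<Longrightarrow> sc c (cp x p) = 0" for p by auto
  show "sc c x = (\<Sum>p\<in>?S. sc c (cp x p))"
    by (subst cp_sum_eq) (simp add: V.scale_sum_right)
qed

lemma cp_zero: "cp 0 = (\<lambda>p. 0)"
  by (rule cp_eq, rule decompI[of "{}"]) (auto intro: V.subspace_0[OF subsp])

lemma cp_hom: "x \<in> Vh a n \<Longrightarrow> cp x = (\<lambda>p. if p = (a, n) then x else 0)"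
  by (rule cp_eq, rule decompI[of "{(a,n)}"]) (auto intro: V.subspace_0[OF subsp])

lemma cp_sum: "cp (sum f I) = (\<lambda>p. \<Sum>i\<in>I. cp (f i) p)"
proof (induction I rule: infinite_finite_induct)
  case (infinite A) then show ?case by (simp add: cp_zero)
next
  case empty then show ?case by (simp add: cp_zero)
next
  case (insert x F) then show ?case by (simp add: cp_add)
qed

lemma wtproj_cp: "wtproj Vh n v = fsum (\<lambda>a. cp v (a, n))"
  unfolding wtproj_def comp_cp by simp

lemma wtproj_hom: "x \<in> Vh a m \<Longrightarrow> wtproj Vh n x = (if n = m then x else 0)"
proof -
  assume x: "x \<in> Vh a m"
  have e: "wtproj Vh n x = fsum (\<lambda>b. if (b, n) = (a, m) then x else 0)"
    unfolding wtproj_cp cp_hom[OF x] by simp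
  show ?thesis
  proof (cases "n = m")
    case True
    show ?thesis unfolding e using True by (subst fsum_single[where a=a]) auto
  qed (auto simp: e intro!: fsum_zero)
qed

lemma wt_supp_fin: "finite {a. cp v (a, n) \<noteq> 0}"
proof -
  have "{a. cp v (a, n) \<noteq> 0} \<subseteq> fst ` {p. cp v p \<noteq> 0}" by force
  then show ?thesis using cp_fin finite_subset by blast
qed

lemma wtproj_add: "wtproj Vh n (x + y) = wtproj Vh n x + wtproj Vh n y"
proof -
  let ?S = "{a. cp x (a, n) \<noteq> 0} \<union> {a. cp y (a, n) \<noteq> 0}"
  have f: "finite ?S" using wt_supp_fin by auto
  show ?thesis unfolding wtproj_cp cp_add
    by (subst (1 2 3) fsum_eq[OF f]) (auto simp: sum.distrib)
qed

lemma wtproj_zero: "wtproj Vh n 0 = 0"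
  unfolding wtproj_cp cp_zero by (simp add: fsum_zero)

lemma wtproj_sum: "wtproj Vh n (sum f I) = (\<Sum>i\<in>I. wtproj Vh n (f i))"
  by (induction I rule: infinite_finite_induct) (auto simp: wtproj_zero wtproj_add)

lemma Vgr_comp: "v \<in> Vgr sc Vh a \<Longrightarrow> a' \<noteq> a \<Longrightarrow> cp v (a', n) = 0"
  unfolding Vgr_def
proof (induction v rule: V.span_induct_alt)
  case base then show ?case by (simp add: cp_zero)
next
  case (step c x y)
  then obtain m where "x \<in> Vh a m" by auto
  then show ?case using step by (simp add: cp_add cp_sc cp_hom)
qed

lemma Vh_Vgr: "x \<in> Vh a n \<Longrightarrow> x \<in> Vgr sc Vh a"
  unfolding Vgr_def by (rule V.span_base) auto

lemma Vgr_sub: "V.subspace (Vgr sc Vh a)"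
  unfolding Vgr_def by (rule V.subspace_span)

end


context aia begin

lemma F_nz: "F a b c \<noteq> 0" using P0 unfolding abelian_3cocycle_def by blast
lemma Om_nz: "Om a b \<noteq> 0" using P0 unfolding abelian_3cocycle_def by blast
lemma F_norm: "F 0 a b = 1" "F a 0 b = 1" "F a b 0 = 1" using P0 unfolding abelian_3cocycle_def by blast+

lemma Om0: "Om 0 a = 1"
proof -
  have "F 0 0 a * Om (0 + 0) a * F a 0 0 = Om 0 a * F 0 a 0 * Om 0 a"
    using P0 unfolding abelian_3cocycle_def by blast
  then have "Om 0 a = Om 0 a * Om 0 a" by (simp add: F_norm)
  then show ?thesis using Om_nz[of 0 a] by simp
qed

lemma Bfac0: "Bfac F Om 0 a b = 1"
  unfolding Bfac_def by (simp add: F_norm Om0)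

lemma L0: "w \<in> Vh a n \<Longrightarrow> md om 1 w = sc n w" using P15 by blast

lemma md_zero1: "md 0 k w = 0"
  using P4[rule_format, of 0 0 k w] by simp
lemma md_zero3: "md v k 0 = 0"
  using P6[rule_format, of v k 0 0] by simp
lemma md_sum3: "md v k (sum f I) = (\<Sum>i\<in>I. md v k (f i))"
  by (induction I rule: infinite_finite_induct) (auto simp: md_zero3 P6)
lemma md_sum1: "md (sum f I) k w = (\<Sum>i\<in>I. md (f i) k w)"
  by (induction I rule: infinite_finite_induct) (auto simp: md_zero1 P4)

lemma trunc: "v1 \<in> Vgr sc Vh a1 \<Longrightarrow> v2 \<in> Vgr sc Vh a2 \<Longrightarrow>
        (\<forall>k. md v1 k v2 \<in> Vgr sc Vh (a1 + a2)) \<and>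
        (\<forall>k. k - bh a1 a2 \<notin> \<int> \<longrightarrow> md v1 k v2 = 0) \<and>
        (\<exists>N::real. \<forall>k. k - bh a1 a2 \<in> \<int> \<and> Re (k - bh a1 a2) > N \<longrightarrow> md v1 k v2 = 0)"
  using P8 by blast

lemma bh0_int: "v \<in> Vgr sc Vh a \<Longrightarrow> v \<noteq> 0 \<Longrightarrow> bh 0 a \<in> \<int>"
proof -
  assume v: "v \<in> Vgr sc Vh a" "v \<noteq> 0"
  have "vac \<in> Vgr sc Vh 0" by (rule Vh_Vgr[OF P9])
  from trunc[OF this v(1)] have "(-1) - bh 0 a \<notin> \<int> \<Longrightarrow> md vac (-1) v = 0" by blast
  moreover have "md vac (-1) v = v" by (simp add: P10)
  ultimately have "(-1) - bh 0 a \<in> \<int>" using v by auto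
  then have "-1 - ((-1) - bh 0 a) \<in> \<int>" by (intro Ints_diff) auto
  then show ?thesis by simp
qed

lemma exp_int_sign: "exp (- pi * \<i> * of_int t) * (-1) powi (- t) = 1"
proof -
  have "exp (- pi * \<i> * of_int t) = exp (of_real pi * \<i>) powi (- t)"
    by (subst exp_power_int) (simp add: algebra_simps)
  then have "exp (- pi * \<i> * of_int t) = (-1) powi (- t)" by simp
  then show ?thesis by (simp add: power_int_mult_distrib[symmetric])
qed

lemma L0_comm:
  assumes v: "v \<in> Vh a n1" and w: "w \<in> Vh b n2"
  shows "md om 1 (md v k w) = sc (n1 + n2 - k - 1) (md v k w)"
proof (cases "v = 0 \<or> w = 0")
  case True then show ?thesis by (auto simp: md_zero1 md_zero3)
next
  case False
  have vg: "v \<in> Vgr sc Vh a" and wg: "w \<in> Vgr sc Vh b" using v w by (auto intro: Vh_Vgr)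
  have og: "om \<in> Vgr sc Vh 0" using Vh_Vgr[OF P13] .
  obtain t where t: "bh 0 a = of_int t" using bh0_int[OF vg] False by (auto elim: Ints_cases)
  have c1: "1 - bh 0 b \<in> \<int>" using bh0_int[OF wg] False by auto
  have J: "fsum (\<lambda>i::nat. sc ((-1) ^ i * ((of_int (-t) + bh 0 a) gchoose i))
                  (md om (1 + of_int (-t) + bh 0 a - of_nat i) (md v (k + of_nat i) w)))
          - sc (Bfac F Om 0 a b * exp (- pi * \<i> * bh 0 a) * (-1) powi (-t))
              (fsum (\<lambda>i::nat. sc ((-1) ^ i * ((of_int (-t) + bh 0 a) gchoose i))
                  (md v (k + of_int (-t) + bh 0 a - of_nat i) (md om (1 + of_nat i) w))))
          = (if 1 - bh 0 b \<in> \<int> then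
               sc (F 0 a b) (fsum (\<lambda>j::nat. sc (1 gchoose j)
                  (md (md om (of_int (-t) + bh 0 a + of_nat j) v) (k + 1 - of_nat j) w)))
             else 0)"
    using P17[rule_format, OF og vg wg, of "-t" 1 k] unfolding Let_def by simp
  have e1: "fsum (\<lambda>i::nat. sc ((-1) ^ i * ((of_int (-t) + bh 0 a) gchoose i))
                  (md om (1 + of_int (-t) + bh 0 a - of_nat i) (md v (k + of_nat i) w)))
           = md om 1 (md v k w)"
    by (subst fsum_single[where a=0]) (auto simp: t gbinomial_0_left)
  have e2: "fsum (\<lambda>i::nat. sc ((-1) ^ i * ((of_int (-t) + bh 0 a) gchoose i))
                  (md v (k + of_int (-t) + bh 0 a - of_nat i) (md om (1 + of_nat i) w)))
           = sc n2 (md v k w)"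
    by (subst fsum_single[where a=0]) (auto simp: t gbinomial_0_left L0[OF w] P7)
  have e3: "Bfac F Om 0 a b * exp (- pi * \<i> * bh 0 a) * (-1) powi (-t) = 1"
    using exp_int_sign[of t] by (simp add: Bfac0 t)
  have e4: "fsum (\<lambda>j::nat. sc (1 gchoose j)
                  (md (md om (of_int (-t) + bh 0 a + of_nat j) v) (k + 1 - of_nat j) w))
         = sc (- (k + 1)) (md v k w) + sc n1 (md v k w)"
  proof -
    have "fsum (\<lambda>j::nat. sc (1 gchoose j)
                  (md (md om (of_int (-t) + bh 0 a + of_nat j) v) (k + 1 - of_nat j) w))
        = (\<Sum>j\<in>{0,1}. sc (1 gchoose j) (md (md om (of_int (-t) + bh 0 a + of_nat j) v) (k + 1 - of_nat j) w))"
    proof (rule fsum_eq)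
      fix j :: nat assume "j \<notin> {0, 1}"
      then have "j = Suc (Suc (j - 2))" by auto
      then obtain i where "j = Suc (Suc i)" by blast
      then show "sc (1 gchoose j) (md (md om (of_int (-t) + bh 0 a + of_nat j) v) (k + 1 - of_nat j) w) = 0"
        by (simp add: gbinomial_Suc_Suc[of 0, simplified] gbinomial_0_left)
    qed simp
    also have "\<dots> = sc (- (k + 1)) (md v k w) + sc n1 (md v k w)"
      by (simp add: t P16 L0[OF v] P5)
    finally show ?thesis .
  qed
  from J[unfolded e1 e2 e3] c1 e4 have "md om 1 (md v k w) - sc n2 (md v k w) = sc (- (k + 1)) (md v k w) + sc n1 (md v k w)"
    by (simp add: F_norm)
  then have "md om 1 (md v k w) = sc n2 (md v k w) + sc (- (k + 1)) (md v k w) + sc n1 (md v k w)"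
    by (simp add: algebra_simps)
  also have "\<dots> = sc (n2 + (- (k + 1)) + n1) (md v k w)"
    by (simp only: V.scale_left_distrib)
  also have "n2 + (- (k + 1)) + n1 = n1 + n2 - k - 1" by simp
  finally show ?thesis .
qed

lemma eigen_Vh:
  assumes u: "u \<in> Vgr sc Vh c" and e: "md om 1 u = sc lam u"
  shows "u \<in> Vh c lam"
proof -
  let ?S = "{p. cp u p \<noteq> 0}"
  have d: "decomp Vh (md om 1 u) (\<lambda>q. sc (snd q) (cp u q))"
  proof (rule decompI[of ?S])
    show "finite ?S" by (rule cp_fin)
    show "sc (snd p) (cp u p) \<in> Vh (fst p) (snd p)" for p by (rule V.subspace_scale[OF subsp cp_in])
    show "p \<notin> ?S \<Longrightarrow> sc (snd p) (cp u p) = 0" for p by simp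
    have "md om 1 u = md om 1 (sum (cp u) ?S)" by (rule arg_cong[OF cp_sum_eq])
    also have "\<dots> = (\<Sum>q\<in>?S. sc (snd q) (cp u q))"
      by (simp add: md_sum3 L0[OF cp_in[of u, unfolded prod.collapse]])
    finally show "md om 1 u = (\<Sum>q\<in>?S. sc (snd q) (cp u q))" .
  qed
  have "\<And>q. sc (snd q) (cp u q) = sc lam (cp u q)"
    using cp_eq[OF d] e cp_sc[of lam u] by metis
  then have q: "\<And>q. cp u q \<noteq> 0 \<Longrightarrow> snd q = lam"
    by (metis V.scale_cancel_right)
  have "u = sum (cp u) ?S" by (rule cp_sum_eq)
  also have "\<dots> \<in> Vh c lam"
  proof (rule V.subspace_sum[OF subsp])
    fix q assume "q \<in> ?S"
    then have sq: "snd q = lam" using q by auto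
    have "fst q = c"
    proof (rule ccontr)
      assume "fst q \<noteq> c"
      then have "cp u (fst q, snd q) = 0" by (rule Vgr_comp[OF u])
      then show False using \<open>q \<in> ?S\<close> by simp
    qed
    note sq this
    then show "cp u q \<in> Vh c lam" using cp_in[of u q] by simp
  qed
  finally show ?thesis .
qed

lemma wt:
  assumes v: "v \<in> Vh a n1" and w: "w \<in> Vh b n2"
  shows "md v k w \<in> Vh (a + b) (n1 + n2 - k - 1)"
proof (rule eigen_Vh)
  show "md v k w \<in> Vgr sc Vh (a + b)" using trunc[OF Vh_Vgr[OF v] Vh_Vgr[OF w]] by blast
  show "md om 1 (md v k w) = sc (n1 + n2 - k - 1) (md v k w)" by (rule L0_comm[OF v w])
qed

end


lemma fps_inv_binom:
  fixes c :: "nat \<Rightarrow> complex"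
  shows "c j = (\<Sum>p=0..j. ((-a) gchoose (j - p)) * (\<Sum>i=0..p. (a gchoose i) * c (p - i)))"
proof -
  let ?cf = "Abs_fps c"
  have "fps_binomial (-a) * fps_binomial a = 1" using fps_binomial_add_mult[of "-a" a] by simp
  then have "fps_binomial (-a) * (fps_binomial a * ?cf) = ?cf"
    by (simp only: mult.assoc[symmetric] mult_1)
  then have "fps_nth (fps_binomial (-a) * (fps_binomial a * ?cf)) j = fps_nth ?cf j"
    by (rule arg_cong[where f="\<lambda>x. fps_nth x j"])
  then have "fps_nth (fps_binomial (-a) * (fps_binomial a * ?cf)) j = c j" by simp
  then have e: "(\<Sum>i=0..j. ((-a) gchoose i) * (\<Sum>k=0..j - i. (a gchoose k) * c (j - i - k))) = c j"
    by (simp add: fps_mult_nth)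
  have "(\<Sum>p=0..j. ((-a) gchoose (j - p)) * (\<Sum>i=0..p. (a gchoose i) * c (p - i)))
      = (\<Sum>i=0..j. ((-a) gchoose (j - (j + 0 - i))) * (\<Sum>k=0..j + 0 - i. (a gchoose k) * c (j + 0 - i - k)))"
    by (rule sum.atLeastAtMost_rev)
  also have "\<dots> = (\<Sum>i=0..j. ((-a) gchoose i) * (\<Sum>k=0..j - i. (a gchoose k) * c (j - i - k)))"
    by (rule sum.cong) auto
  finally show ?thesis using e by simp
qed

lemma binom_abs_summable:
  fixes w a :: complex assumes "norm w < 1"
  shows "summable (\<lambda>n. norm ((a gchoose n) * w ^ n))"
proof -
  define x :: complex where "x = of_real ((1 + norm w) / 2)"
  have "norm x = \<bar>(1 + norm w) / 2\<bar>" by (simp only: x_def norm_of_real)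
  then have nx: "norm x < 1" "norm w < norm x" using assms by auto
  have "summable (\<lambda>n. (a gchoose n) * x ^ n)"
    using gen_binomial_complex[OF nx(1)] by (rule sums_summable)
  then show ?thesis using powser_insidea nx(2) by blast
qed

lemma binom_series:
  fixes alpha w :: complex and c :: "nat \<Rightarrow> complex" and J :: nat
  assumes Q: "\<And>q. J < q \<Longrightarrow> (\<Sum>i=0..q. (alpha gchoose i) * c (q - i)) = 0" and w: "norm w < 1"
  shows "summable (\<lambda>j. norm (c j * w ^ j))"
    and "(\<lambda>j. c j * w ^ j) sums ((1 + w) powr (- alpha) * (\<Sum>q\<le>J. (\<Sum>i=0..q. (alpha gchoose i) * c (q - i)) * w ^ q))"
proof -
  define Qf where "Qf q = (\<Sum>i=0..q. (alpha gchoose i) * c (q - i))" for q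
  define b where "b n = ((- alpha) gchoose n) * w ^ n" for n
  define g where "g p j = (if p \<le> j then Qf p * w ^ p * b (j - p) else 0)" for p j
  have cj: "c j * w ^ j = (\<Sum>p\<le>J. g p j)" for j
  proof -
    have "c j = (\<Sum>p=0..j. ((- alpha) gchoose (j - p)) * Qf p)"
      unfolding Qf_def by (rule fps_inv_binom)
    also have "\<dots> = (\<Sum>p\<in>{0..j} \<inter> {..J}. ((- alpha) gchoose (j - p)) * Qf p)"
      by (rule sum.mono_neutral_right) (auto simp: Qf_def Q)
    finally have "c j * w ^ j = (\<Sum>p\<in>{0..j} \<inter> {..J}. ((- alpha) gchoose (j - p)) * Qf p * w ^ j)"
      by (simp add: sum_distrib_right)
    also have "\<dots> = (\<Sum>p\<in>{0..j} \<inter> {..J}. g p j)"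
    proof (rule sum.cong)
      fix p assume "p \<in> {0..j} \<inter> {..J}"
      then have "w ^ j = w ^ p * w ^ (j - p)" by (simp add: power_add[symmetric])
      then show "((- alpha) gchoose (j - p)) * Qf p * w ^ j = g p j"
        using \<open>p \<in> _\<close> by (simp add: g_def b_def)
    qed simp
    also have "\<dots> = (\<Sum>p\<le>J. g p j)"
      by (rule sum.mono_neutral_left) (auto simp: g_def)
    finally show ?thesis .
  qed
  have bs: "b sums ((1 + w) powr (- alpha))" unfolding b_def by (rule gen_binomial_complex[OF w])
  have gs: "g p sums (Qf p * w ^ p * (1 + w) powr (- alpha))" for p
  proof -
    have "(\<lambda>i. g p (i + p)) sums (Qf p * w ^ p * (1 + w) powr (- alpha))"
      unfolding g_def using sums_mult[OF bs, of "Qf p * w ^ p"] by simp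
    moreover have "(\<Sum>i<p. g p i) = 0" by (simp add: g_def)
    ultimately show ?thesis by (simp add: sums_iff_shift)
  qed
  have "(\<lambda>j. \<Sum>p\<le>J. g p j) sums (\<Sum>p\<le>J. Qf p * w ^ p * (1 + w) powr (- alpha))"
    by (rule sums_sum) (rule gs)
  then show "(\<lambda>j. c j * w ^ j) sums ((1 + w) powr (- alpha) * (\<Sum>q\<le>J. (\<Sum>i=0..q. (alpha gchoose i) * c (q - i)) * w ^ q))"
    by (simp add: cj sum_distrib_left Qf_def mult_ac)
  have bn: "summable (\<lambda>n. norm (b n))" unfolding b_def by (rule binom_abs_summable[OF w])
  have gn: "summable (\<lambda>j. norm (g p j))" for p
  proof -
    have "summable (\<lambda>i. norm (g p (i + p)))"
      unfolding g_def using summable_mult[OF bn, of "norm (Qf p * w ^ p)"] by (simp add: norm_mult)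
    then show ?thesis using summable_iff_shift[where f="\<lambda>j. norm (g p j)" and k=p] by simp
  qed
  show "summable (\<lambda>j. norm (c j * w ^ j))"
  proof (rule summable_comparison_test'[of "\<lambda>j. \<Sum>p\<le>J. norm (g p j)" 0])
    show "summable (\<lambda>j. \<Sum>p\<le>J. norm (g p j))" by (rule summable_sum) (rule gn)
    show "norm (norm (c j * w ^ j)) \<le> (\<Sum>p\<le>J. norm (g p j))" for j
      unfolding cj by (simp add: norm_sum)
  qed
qed


definition fneg :: "complex fps \<Rightarrow> complex fps" where
  "fneg f = Abs_fps (\<lambda>n. (-1) ^ n * fps_nth f n)"

lemma fneg_nth: "fps_nth (fneg f) n = (-1) ^ n * fps_nth f n"
  by (simp add: fneg_def)

lemma fneg_mult: "fneg (f * g) = fneg f * fneg g"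
proof (rule fps_ext)
  fix n
  have "fps_nth (fneg (f * g)) n = (\<Sum>i=0..n. (-1) ^ n * (fps_nth f i * fps_nth g (n - i)))"
    by (simp add: fneg_nth fps_mult_nth sum_distrib_left)
  also have "\<dots> = (\<Sum>i=0..n. ((-1) ^ i * fps_nth f i) * ((-1) ^ (n - i) * fps_nth g (n - i)))"
  proof (rule sum.cong)
    fix i assume "i \<in> {0..n}"
    then have "(-1::complex) ^ n = (-1) ^ i * (-1) ^ (n - i)" by (simp add: power_add[symmetric])
    then show "(-1) ^ n * (fps_nth f i * fps_nth g (n - i)) = ((-1) ^ i * fps_nth f i) * ((-1) ^ (n - i) * fps_nth g (n - i))"
      by simp
  qed simp
  also have "\<dots> = fps_nth (fneg f * fneg g) n" by (simp add: fps_mult_nth fneg_nth)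
  finally show "fps_nth (fneg (f * g)) n = fps_nth (fneg f * fneg g) n" .
qed

lemma fneg_one: "fneg 1 = 1"
  by (rule fps_ext) (simp add: fneg_nth)

lemma tri_swap:
  fixes g :: "nat \<Rightarrow> nat \<Rightarrow> 'b::comm_monoid_add"
  shows "(\<Sum>q\<le>h. \<Sum>i\<le>h-q. g q i) = (\<Sum>p\<le>h. \<Sum>q\<le>h-p. g q (h - p - q))"
proof -
  have "(\<Sum>q\<le>h. \<Sum>i\<le>h-q. g q i) = sum (\<lambda>(q,i). g q i) (SIGMA q:{..h}. {..h-q})"
    by (rule sum.Sigma) auto
  also have "\<dots> = sum (\<lambda>(p,q). g q (h - p - q)) (SIGMA p:{..h}. {..h-p})"
    by (rule sum.reindex_bij_witness[where i="\<lambda>(p,q). (q, h - p - q)" and j="\<lambda>(q,i). (h - q - i, q)"]) auto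
  also have "\<dots> = (\<Sum>p\<le>h. \<Sum>q\<le>h-p. g q (h - p - q))"
    by (rule sum.Sigma[symmetric]) auto
  finally show ?thesis .
qed

lemma Lq_closed:
  fixes C :: "nat \<Rightarrow> complex" and sz :: complex
  defines "P \<equiv> \<lambda>q. (\<Sum>i=0..q. (-1) ^ i * (sz gchoose i) * C (q - i))"
  assumes "q \<le> h"
  shows "(\<Sum>i=0..h-q. (-1) ^ i * ((sz - 1 - of_nat q) gchoose i) * C (h - q - i))
       = (\<Sum>i=0..h-q. of_nat ((i + q) choose i) * P (h - q - i))"
proof -
  let ?Cf = "Abs_fps C" and ?Pf = "Abs_fps P"
  have Pf: "?Pf = fneg (fps_binomial sz) * ?Cf"
    by (rule fps_ext) (simp add: P_def fps_mult_nth fneg_nth mult.assoc)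
  have inv: "fneg (fps_binomial (-sz)) * fneg (fps_binomial sz) = 1"
    using fps_binomial_add_mult[of "-sz" sz] by (simp add: fneg_mult[symmetric] fneg_one)
  have Cf: "?Cf = fneg (fps_binomial (-sz)) * ?Pf"
    unfolding Pf by (simp only: mult.assoc[symmetric] inv mult_1)
  have comb: "fneg (fps_binomial (sz - 1 - of_nat q)) * fneg (fps_binomial (-sz)) = fneg (fps_binomial (-1 - of_nat q))"
    using fps_binomial_add_mult[of "sz - 1 - of_nat q" "-sz"] by (simp add: fneg_mult[symmetric])
  have "(\<Sum>i=0..h-q. (-1) ^ i * ((sz - 1 - of_nat q) gchoose i) * C (h - q - i))
      = fps_nth (fneg (fps_binomial (sz - 1 - of_nat q)) * ?Cf) (h - q)"
    by (simp add: fps_mult_nth fneg_nth mult.assoc)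
  also have "\<dots> = fps_nth (fneg (fps_binomial (-1 - of_nat q)) * ?Pf) (h - q)"
    unfolding Cf by (simp only: mult.assoc[symmetric] comb)
  also have "\<dots> = (\<Sum>i=0..h-q. ((-1) ^ i * ((-1 - of_nat q) gchoose i)) * P (h - q - i))"
    by (simp add: fps_mult_nth fneg_nth)
  also have "\<dots> = (\<Sum>i=0..h-q. of_nat ((i + q) choose i) * P (h - q - i))"
  proof (rule sum.cong)
    fix i assume "i \<in> {0..h-q}"
    have "((-1 - of_nat q) gchoose i) = (-1) ^ i * ((of_nat i - (-1 - of_nat q) - 1) gchoose i :: complex)"
      by (rule gbinomial_negated_upper)
    also have "(of_nat i - (-1 - of_nat q) - 1 :: complex) = of_nat (i + q)" by simp
    finally have "(-1) ^ i * ((-1 - of_nat q) gchoose i) = ((of_nat (i + q) :: complex) gchoose i)"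
      by (simp add: mult.assoc[symmetric] power_mult_distrib[symmetric])
    then show "((-1) ^ i * ((-1 - of_nat q) gchoose i)) * P (h - q - i) = of_nat ((i + q) choose i) * P (h - q - i)"
      by (simp add: binomial_gbinomial)
  qed simp
  finally show ?thesis .
qed

lemma Lq_poly:
  fixes P :: "nat \<Rightarrow> complex" and u :: complex
  assumes "J \<le> h" and PJ: "\<And>p. J < p \<Longrightarrow> P p = 0"
  shows "(\<Sum>q\<le>h. (\<Sum>i=0..h-q. of_nat ((i + q) choose i) * P (h - q - i)) * u ^ q)
       = (\<Sum>p\<le>J. P p * (1 + u) ^ (h - p))"
proof -
  have "(\<Sum>q\<le>h. (\<Sum>i=0..h-q. of_nat ((i + q) choose i) * P (h - q - i)) * u ^ q)
      = (\<Sum>q\<le>h. \<Sum>i\<le>h-q. of_nat ((i + q) choose i) * P (h - q - i) * u ^ q)"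
    by (simp add: sum_distrib_right atLeast0AtMost)
  also have "\<dots> = (\<Sum>p\<le>h. \<Sum>q\<le>h-p. of_nat ((h - p - q + q) choose (h - p - q)) * P (h - q - (h - p - q)) * u ^ q)"
    by (rule tri_swap)
  also have "\<dots> = (\<Sum>p\<le>h. P p * (\<Sum>q\<le>h-p. of_nat ((h - p) choose q) * u ^ q * 1 ^ (h - p - q)))"
  proof (rule sum.cong[OF refl])
    fix p assume p: "p \<in> {..h}"
    show "(\<Sum>q\<le>h-p. of_nat ((h - p - q + q) choose (h - p - q)) * P (h - q - (h - p - q)) * u ^ q)
        = P p * (\<Sum>q\<le>h-p. of_nat ((h - p) choose q) * u ^ q * 1 ^ (h - p - q))"
      unfolding sum_distrib_left
    proof (rule sum.cong[OF refl])
      fix q assume q: "q \<in> {..h-p}"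
      then have "h - p - q + q = h - p" "h - q - (h - p - q) = p" using p by auto
      moreover have "(h - p) choose (h - p - q) = (h - p) choose q" using binomial_symmetric[of q "h - p"] q by simp
      ultimately show "of_nat ((h - p - q + q) choose (h - p - q)) * P (h - q - (h - p - q)) * u ^ q
          = P p * (of_nat ((h - p) choose q) * u ^ q * 1 ^ (h - p - q))" by simp
    qed
  qed
  also have "\<dots> = (\<Sum>p\<le>h. P p * (u + 1) ^ (h - p))"
    by (simp only: binomial_ring[symmetric])
  also have "\<dots> = (\<Sum>p\<le>J. P p * (u + 1) ^ (h - p))"
    by (rule sum.mono_neutral_right) (use assms in auto)
  also have "\<dots> = (\<Sum>p\<le>J. P p * (1 + u) ^ (h - p))" by (simp add: add.commute)
  finally show ?thesis .
qed


lemma exp_lg: "z \<noteq> 0 \<Longrightarrow> exp (lg z) = z"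
proof -
  assume z: "z \<noteq> 0"
  have "cis (arg0 z) = cis (Arg z)"
  proof (cases "0 \<le> Arg z")
    case False
    then have "arg0 z = Arg z + 2 * pi" by (simp add: arg0_def)
    then show ?thesis by (simp add: cis_mult[symmetric])
  qed (simp add: arg0_def)
  have "exp (lg z) = exp (complex_of_real (ln (cmod z))) * exp (\<i> * complex_of_real (arg0 z))"
    by (simp add: lg_def exp_add)
  also have "\<dots> = of_real (cmod z) * cis (arg0 z)"
    using z by (simp add: cis_conv_exp exp_of_real)
  also have "\<dots> = rcis (cmod z) (Arg z)" using \<open>cis (arg0 z) = cis (Arg z)\<close> by (simp add: rcis_def)
  also have "\<dots> = z" by (rule rcis_cmod_Arg)
  finally show ?thesis .
qed

lemma cpw_add_nat: "z \<noteq> 0 \<Longrightarrow> cpw z (a + of_nat j) = cpw z a * z ^ j"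
proof -
  assume z: "z \<noteq> 0"
  have "cpw z (a + of_nat j) = exp (a * lg z) * exp (of_nat j * lg z)"
    by (simp add: cpw_def distrib_right exp_add)
  also have "exp (of_nat j * lg z) = z ^ j" using z by (simp add: exp_of_nat_mult exp_lg)
  finally show ?thesis by (simp add: cpw_def)
qed

lemma cpw_diff_nat: "z \<noteq> 0 \<Longrightarrow> cpw z (a - of_nat j) = cpw z a * (inverse z) ^ j"
proof -
  assume z: "z \<noteq> 0"
  have "exp (- (of_nat j * lg z)) = inverse (exp (lg z) ^ j)"
    by (simp add: exp_minus exp_of_nat_mult)
  then show ?thesis using z by (simp add: cpw_def left_diff_distrib exp_diff exp_lg divide_inverse power_inverse exp_minus[symmetric])
qed

lemma log1m_Ln: "norm x < 1 \<Longrightarrow> log1m_series x = Ln (1 - x)"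
proof -
  assume x: "norm x < 1"
  have "(\<lambda>n. - ((- (- x)) ^ n) / of_nat n) sums ln (1 + - x)"
    using Ln_series'[of "-x"] x by simp
  then have s: "(\<lambda>n. - (x ^ n / of_nat n)) sums Ln (1 - x)" by simp
  then have "(\<lambda>n. - (x ^ Suc n / of_nat (Suc n))) sums Ln (1 - x)"
    using sums_Suc_iff[of "\<lambda>n. - (x ^ n / of_nat n)"] by simp
  then have "(\<lambda>n. x ^ Suc n / of_nat (Suc n)) sums (- Ln (1 - x))"
    using sums_minus by fastforce
  then show ?thesis unfolding log1m_series_def by (simp add: sums_iff)
qed

lemma pint_prop:
  assumes "cmod z2 < cmod z1" and "z1 \<noteq> z2"
  shows "lg (z1 - z2) = lg z1 + Ln (1 - z2 / z1) + 2 * pi * \<i> * of_int (pint z1 z2)"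
proof -
  have z1: "z1 \<noteq> 0" using assms by auto
  have nx: "norm (z2 / z1) < 1" using assms z1 by (simp add: norm_divide divide_less_eq)
  have "1 - z2 / z1 \<noteq> 0" using nx by auto
  have "exp (lg (z1 - z2)) = exp (lg z1 + Ln (1 - z2 / z1))"
    using z1 assms(2) \<open>1 - z2 / z1 \<noteq> 0\<close> by (simp add: exp_add exp_lg right_diff_distrib)
  then obtain n :: int where n: "lg (z1 - z2) = lg z1 + Ln (1 - z2 / z1) + of_int (2 * n) * pi * \<i>"
    by (auto simp: exp_eq)
  have ex: "\<exists>p::int. lg (z1 - z2) = lg z1 + log1m_series (z2 / z1) + 2 * pi * \<i> * of_int p"
    using n log1m_Ln[OF nx] by (intro exI[of _ n]) (simp add: algebra_simps)
  have un: "p = q" if "lg (z1 - z2) = lg z1 + log1m_series (z2 / z1) + 2 * pi * \<i> * of_int p"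
      "lg (z1 - z2) = lg z1 + log1m_series (z2 / z1) + 2 * pi * \<i> * of_int q" for p q :: int
    using that by simp
  have "lg (z1 - z2) = lg z1 + log1m_series (z2 / z1) + 2 * pi * \<i> * of_int (pint z1 z2)"
    unfolding pint_def by (rule theI'[of "\<lambda>p. _ = _ + _ + 2 * pi * \<i> * of_int p"]) (use ex un in blast)
  then show ?thesis using log1m_Ln[OF nx] by simp
qed


lemma branch:
  fixes z0 z1 z2 R0 S0 M0 K0 b c :: complex and p12 pp :: int and p :: nat
  assumes nz: "z0 \<noteq> 0" "z1 \<noteq> 0" "z2 \<noteq> 0"
    and nz2: "1 - z2 / z1 \<noteq> 0" "1 + z0 / z2 \<noteq> 0"
    and h1: "lg z0 = lg z1 + Ln (1 - z2 / z1) + 2 * pi * \<i> * of_int p12"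
    and h2: "lg z1 = lg z2 + Ln (1 + z0 / z2) + 2 * pi * \<i> * of_int pp"
    and i1: "R0 + 1 - b \<in> \<int>" and i2: "c + R0 - M0 \<in> \<int>" and e: "S0 + R0 = M0 + K0"
  shows "cpw z0 (- R0 - 1) * cpw z2 (- S0 - 1) * (1 + z0 / z2) powr (R0 - M0 - of_nat p)
     = exp (2 * pi * \<i> * b) powi (- p12) * exp (2 * pi * \<i> * c) powi pp
       * (cpw z1 (- M0 - 1) * cpw z2 (- K0 - 1) * (1 - z2 / z1) powr (- (R0 + 1)) * (z2 / z1) ^ p)"
proof -
  define L0 L1 L2 A B where "L0 = lg z0" "L1 = lg z1" "L2 = lg z2" "A = Ln (1 - z2 / z1)" "B = Ln (1 + z0 / z2)"
  have hA: "A = L0 - L1 - 2 * pi * \<i> * of_int p12" using h1 by (simp add: L0_L1_L2_A_B_def)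
  have hB: "B = L1 - L2 - 2 * pi * \<i> * of_int pp" using h2 by (simp add: L0_L1_L2_A_B_def)
  have q: "z2 / z1 = exp (L2 - L1)" using nz by (simp add: L0_L1_L2_A_B_def exp_diff exp_lg)
  define X where "X = (- R0 - 1) * L0 + (- S0 - 1) * L2 + (R0 - M0 - of_nat p) * B"
  define Y where "Y = of_int (- p12) * (2 * pi * \<i> * b) + of_int pp * (2 * pi * \<i> * c)
      + ((- M0 - 1) * L1 + (- K0 - 1) * L2 + (- (R0 + 1)) * A + of_nat p * (L2 - L1))"
  have qp: "(z2 / z1) ^ p = exp (of_nat p * (L2 - L1))" unfolding q by (simp add: exp_of_nat_mult)
  have pA: "(1 - z2 / z1) powr (- (R0 + 1)) = exp (- (R0 + 1) * A)"
    using nz2 by (simp add: powr_def L0_L1_L2_A_B_def)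
  have pB: "(1 + z0 / z2) powr (R0 - M0 - of_nat p) = exp ((R0 - M0 - of_nat p) * B)"
    using nz2 by (simp add: powr_def L0_L1_L2_A_B_def)
  have c0: "cpw z0 (- R0 - 1) = exp ((- R0 - 1) * L0)" "cpw z2 (- S0 - 1) = exp ((- S0 - 1) * L2)"
     "cpw z1 (- M0 - 1) = exp ((- M0 - 1) * L1)" "cpw z2 (- K0 - 1) = exp ((- K0 - 1) * L2)"
    by (simp_all add: cpw_def L0_L1_L2_A_B_def)
  have ep: "exp (2 * pi * \<i> * b) powi (- p12) = exp (of_int (- p12) * (2 * pi * \<i> * b))"
     "exp (2 * pi * \<i> * c) powi pp = exp (of_int pp * (2 * pi * \<i> * c))"
    by (simp_all only: exp_power_int)
  have lhs: "cpw z0 (- R0 - 1) * cpw z2 (- S0 - 1) * (1 + z0 / z2) powr (R0 - M0 - of_nat p) = exp X"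
    unfolding pB c0 X_def by (simp only: exp_add)
  have rhs: "exp (2 * pi * \<i> * b) powi (- p12) * exp (2 * pi * \<i> * c) powi pp
       * (cpw z1 (- M0 - 1) * cpw z2 (- K0 - 1) * (1 - z2 / z1) powr (- (R0 + 1)) * (z2 / z1) ^ p) = exp Y"
    unfolding qp pA c0 ep Y_def by (simp only: exp_add mult.assoc)
  obtain n1 where n1: "R0 + 1 - b = of_int n1" using i1 by (auto elim: Ints_cases)
  obtain n2 where n2: "c + R0 - M0 = of_int n2" using i2 by (auto elim: Ints_cases)
  define N where "N = p12 * n1 + pp * (n2 - int p)"
  have "Y = X + 2 * of_int N * pi * \<i>"
  proof -
    have S0: "S0 = M0 + K0 - R0" using e by (simp add: algebra_simps)
    have b': "b = R0 + 1 - of_int n1" using n1 by (simp add: algebra_simps)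
    have c': "c = of_int n2 - R0 + M0" using n2 by (simp add: algebra_simps)
    show ?thesis unfolding X_def Y_def N_def hA hB S0 b' c'
      by (simp add: algebra_simps)
  qed
  moreover have "exp (2 * of_int N * pi * \<i>) = 1" by (rule exp_integer_2pi) simp
  ultimately have "exp Y = exp X" by (simp add: exp_add)
  then show ?thesis using lhs rhs by simp
qed


lemma has_sum_shift_complex:
  fixes f :: "complex \<Rightarrow> complex" and g :: "nat \<Rightarrow> complex"
  assumes fg: "\<And>j. f (nb + of_nat j) = g j"
    and f0: "\<And>n. n \<notin> range (\<lambda>j. nb + of_nat j) \<Longrightarrow> f n = 0"
    and sn: "summable (\<lambda>j. norm (g j))" and gs: "g sums S"
  shows "(f has_sum S) UNIV"
proof -
  let ?h = "\<lambda>j::nat. nb + of_nat j"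
  have inj: "inj_on ?h UNIV" by (auto simp: inj_on_def)
  have "(g has_sum S) UNIV" by (rule norm_summable_imp_has_sum[OF sn gs])
  moreover have "f \<circ> ?h = g" using fg by auto
  ultimately have "(f has_sum S) (range ?h)" using has_sum_reindex[OF inj, of f S] by simp
  then show ?thesis
    by (rule has_sum_cong_neutral[THEN iffD1, rotated -1]) (auto simp: f0)
qed

lemma int_bound_finite: "finite {i::nat. \<exists>j::nat. a + of_nat i = (K::complex) - of_nat j}"
proof (rule finite_subset[of _ "{..nat \<lceil>Re (K - a)\<rceil>}"])
  show "{i::nat. \<exists>j::nat. a + of_nat i = K - of_nat j} \<subseteq> {..nat \<lceil>Re (K - a)\<rceil>}"
  proof
    fix i assume "i \<in> {i::nat. \<exists>j::nat. a + of_nat i = K - of_nat j}"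
    then obtain j :: nat where "a + of_nat i = K - of_nat j" by blast
    then have "Re (K - a) = real i + real j" by (simp add: algebra_simps complex_eq_iff)
    then have "Re (K - a) = real (i + j)" by simp
    then have "nat \<lceil>Re (K - a)\<rceil> = i + j" by (simp only: ceiling_of_nat nat_int)
    then show "i \<in> {..nat \<lceil>Re (K - a)\<rceil>}" by simp
  qed
qed simp

locale hom = aia sc Vh md vac om F Om bh
  for sc :: "complex \<Rightarrow> 'v::ab_group_add \<Rightarrow> 'v"
    and Vh :: "'a::ab_group_add \<Rightarrow> complex \<Rightarrow> 'v set"
    and md :: "'v \<Rightarrow> complex \<Rightarrow> 'v \<Rightarrow> 'v"
    and vac om :: 'v
    and F :: "'a \<Rightarrow> 'a \<Rightarrow> 'a \<Rightarrow> complex" and Om bh :: "'a \<Rightarrow> 'a \<Rightarrow> complex" +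
  fixes v1 v2 v3 :: 'v and a1 a2 a3 :: 'a and w1 w2 w3 n' :: complex and phi :: "'v \<Rightarrow> complex"
    and N12 N23 N13 :: int and z1 z2 :: complex
  assumes v1: "v1 \<in> Vh a1 w1" and v2: "v2 \<in> Vh a2 w2" and v3: "v3 \<in> Vh a3 w3"
    and phi_add: "\<And>x y. phi (x + y) = phi x + phi y"
    and phi_sc: "\<And>c x. phi (sc c x) = c * phi x"
    and phi_wt: "\<And>a n x. x \<in> Vh a n \<Longrightarrow> n \<noteq> n' \<Longrightarrow> phi x = 0"
    and T12: "\<And>k. md v1 k v2 \<noteq> 0 \<Longrightarrow> \<exists>j::nat. k = bh a1 a2 + of_int N12 - of_nat j"
    and T23: "\<And>k. md v2 k v3 \<noteq> 0 \<Longrightarrow> \<exists>j::nat. k = bh a2 a3 + of_int N23 - of_nat j"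
    and T13: "\<And>k. md v1 k v3 \<noteq> 0 \<Longrightarrow> \<exists>j::nat. k = bh a1 a3 + of_int N13 - of_nat j"
    and zz: "cmod z1 > cmod z2" "cmod z2 > cmod (z1 - z2)" "cmod (z1 - z2) > 0"
begin

lemma phi_zero: "phi 0 = 0" using phi_add[of 0 0] by simp
lemma phi_minus: "phi (- x) = - phi x"
proof -
  have "phi x + phi (- x) = 0" using phi_add[of x "- x"] phi_zero by simp
  then show ?thesis by (metis add.commute eq_neg_iff_add_eq_0)
qed
lemma phi_diff: "phi (x - y) = phi x - phi y" using phi_add[of x "- y"] phi_minus by simp
lemma phi_sum: "phi (sum f I) = (\<Sum>i\<in>I. phi (f i))"
  by (induction I rule: infinite_finite_induct) (auto simp: phi_zero phi_add)
lemma phi_fsum: "finite S \<Longrightarrow> (\<And>i. i \<notin> S \<Longrightarrow> f i = 0) \<Longrightarrow> phi (fsum f) = (\<Sum>i\<in>S. phi (f i))"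
  by (simp add: fsum_eq phi_sum)

definition "K0 = bh a2 a3 + of_int N23"
definition "M0 = w1 + w2 + w3 - 2 - n' - K0"
definition "R0 = bh a1 a2 + of_int N12"
definition "S0 = w1 + w2 + w3 - 2 - n' - R0"
definition "s0 = R0 + 1"
definition "Cc j = phi (md v1 (M0 + of_nat j) (md v2 (K0 - of_nat j) v3))"
definition "Dd j = phi (md (md v1 (R0 - of_nat j) v2) (S0 + of_nat j) v3)"
definition "Pp q = (\<Sum>i=0..q. (-1) ^ i * (s0 gchoose i) * Cc (q - i))"
definition "Jc = nat \<lceil>of_int N13 - Re (M0 - s0 - bh a1 a3)\<rceil>"
definition "hh = Jc + nat \<lceil>of_int N13 - Re (M0 - R0 - bh a1 a3)\<rceil> + 1"
definition "mm = M0 - R0 + of_nat hh"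

lemma SR: "S0 + R0 = M0 + K0" by (simp add: S0_def M0_def)

lemma v2v3_wt: "md v2 k v3 \<in> Vh (a2 + a3) (w2 + w3 - k - 1)" by (rule wt[OF v2 v3])

lemma phi_v1v2v3: "phi (md v1 m (md v2 k v3)) \<noteq> 0 \<Longrightarrow> m = M0 + K0 - k"
proof -
  assume ne: "phi (md v1 m (md v2 k v3)) \<noteq> 0"
  have "md v1 m (md v2 k v3) \<in> Vh (a1 + (a2 + a3)) (w1 + (w2 + w3 - k - 1) - m - 1)"
    by (rule wt[OF v1 v2v3_wt])
  then have "w1 + (w2 + w3 - k - 1) - m - 1 = n'" using phi_wt ne by blast
  then show ?thesis by (simp add: M0_def algebra_simps)
qed

lemma C_neg: "md v2 (K0 - of_nat j + of_nat i) v3 \<noteq> 0 \<Longrightarrow> i \<le> j"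
proof -
  assume "md v2 (K0 - of_nat j + of_nat i) v3 \<noteq> 0"
  then obtain j' :: nat where "K0 - of_nat j + of_nat i = bh a2 a3 + of_int N23 - of_nat j'" using T23 by blast
  then have "of_nat i + of_nat j' = (of_nat j :: complex)" by (simp add: K0_def algebra_simps)
  then have "i + j' = j" by (metis of_nat_add of_nat_eq_iff)
  then show ?thesis by simp
qed

end


context aia begin

lemma jac_s:
  assumes "v1 \<in> Vgr sc Vh a1" "v2 \<in> Vgr sc Vh a2" "v3 \<in> Vgr sc Vh a3" and s: "s = of_int l + bh a1 a2"
  shows "fsum (\<lambda>i::nat. sc ((-1) ^ i * (s gchoose i)) (md v1 (m + s - of_nat i) (md v2 (k + of_nat i) v3)))
          - sc (Bfac F Om a1 a2 a3 * exp (- pi * \<i> * bh a1 a2) * (-1) powi l)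
              (fsum (\<lambda>i::nat. sc ((-1) ^ i * (s gchoose i)) (md v2 (k + s - of_nat i) (md v1 (m + of_nat i) v3))))
          = (if m - bh a1 a3 \<in> \<int> then
               sc (F a1 a2 a3) (fsum (\<lambda>j::nat. sc (m gchoose j) (md (md v1 (s + of_nat j) v2) (k + m - of_nat j) v3)))
             else 0)"
proof -
  have e: "m + of_int l + bh a1 a2 = m + s" "k + of_int l + bh a1 a2 = k + s" using s by (simp_all add: add.assoc)
  show ?thesis using P17[rule_format, OF assms(1-3), of l m k] unfolding Let_def e s[symmetric] .
qed

end

context hom begin

lemma sc0: "sc c 0 = 0" by simp

lemma prod_at: "prod_term Vh md phi v1 v2 v3 z1 z2 (w2 + w3 - K0 - 1 + of_nat j)
    = Cc j * cpw z1 (- (M0 + of_nat j) - 1) * cpw z2 (- (K0 - of_nat j) - 1)"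
  unfolding prod_term_def
proof (subst fsum_single[where a="(M0 + of_nat j, K0 - of_nat j)"])
  fix x assume x: "x \<noteq> (M0 + of_nat j, K0 - of_nat j)"
  obtain m k where mk: "x = (m, k)" by force
  show "(case x of (m, k) \<Rightarrow> phi (md v1 m (wtproj Vh (w2 + w3 - K0 - 1 + of_nat j) (md v2 k v3))) * cpw z1 (- m - 1) * cpw z2 (- k - 1)) = 0"
  proof (cases "w2 + w3 - K0 - 1 + of_nat j = w2 + w3 - k - 1")
    case True
    then have k: "k = K0 - of_nat j" by (simp add: algebra_simps)
    then have "m \<noteq> M0 + of_nat j" using x mk by auto
    then have "phi (md v1 m (md v2 k v3)) = 0" using phi_v1v2v3[of m k] k by auto
    then show ?thesis using True mk by (simp add: wtproj_hom[OF v2v3_wt])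
  next
    case False
    then show ?thesis using mk by (simp add: wtproj_hom[OF v2v3_wt] md_zero3 phi_zero)
  qed
next
  show "(case (M0 + of_nat j, K0 - of_nat j) of (m, k) \<Rightarrow> phi (md v1 m (wtproj Vh (w2 + w3 - K0 - 1 + of_nat j) (md v2 k v3))) * cpw z1 (- m - 1) * cpw z2 (- k - 1))
    = Cc j * cpw z1 (- (M0 + of_nat j) - 1) * cpw z2 (- (K0 - of_nat j) - 1)"
    by (simp add: wtproj_hom[OF v2v3_wt] Cc_def)
qed

lemma prod_off: "n \<notin> range (\<lambda>j::nat. w2 + w3 - K0 - 1 + of_nat j) \<Longrightarrow> prod_term Vh md phi v1 v2 v3 z1 z2 n = 0"
  unfolding prod_term_def
proof (rule fsum_zero)
  assume n: "n \<notin> range (\<lambda>j::nat. w2 + w3 - K0 - 1 + of_nat j)"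
  fix x obtain m k :: complex where mk: "x = (m, k)" by force
  have "md v1 m (wtproj Vh n (md v2 k v3)) = 0"
  proof (cases "n = w2 + w3 - k - 1 \<and> md v2 k v3 \<noteq> 0")
    case True
    then obtain j :: nat where "k = K0 - of_nat j" using T23 unfolding K0_def by blast
    then have "n = w2 + w3 - K0 - 1 + of_nat j" using True by simp
    then show ?thesis using n by auto
  next
    case False
    then show ?thesis by (auto simp: wtproj_hom[OF v2v3_wt] md_zero3)
  qed
  then show "(case x of (m, k) \<Rightarrow> phi (md v1 m (wtproj Vh n (md v2 k v3))) * cpw z1 (- m - 1) * cpw z2 (- k - 1)) = 0"
    using mk by (simp add: phi_zero)
qed

lemma z_nz: "z1 \<noteq> 0" "z2 \<noteq> 0" "z1 - z2 \<noteq> 0" using zz by auto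

lemma prod_g: "Cc j * cpw z1 (- (M0 + of_nat j) - 1) * cpw z2 (- (K0 - of_nat j) - 1)
   = cpw z1 (- M0 - 1) * cpw z2 (- K0 - 1) * (Cc j * (z2 / z1) ^ j)"
proof -
  have e: "- (M0 + of_nat j) - 1 = (- M0 - 1) - of_nat j" "- (K0 - of_nat j) - 1 = (- K0 - 1) + of_nat j" by simp_all
  have a: "cpw z1 (- (M0 + of_nat j) - 1) = cpw z1 (- M0 - 1) * (inverse z1) ^ j"
    unfolding e(1) by (rule cpw_diff_nat[OF z_nz(1)])
  have b: "cpw z2 (- (K0 - of_nat j) - 1) = cpw z2 (- K0 - 1) * z2 ^ j"
    unfolding e(2) by (rule cpw_add_nat[OF z_nz(2)])
  show ?thesis unfolding a b by (simp add: power_mult_distrib power_inverse mult_ac divide_inverse)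
qed

end


context hom begin

lemma v1v2_zero: "md v1 (R0 + 1 + of_nat j) v2 = 0"
proof (rule ccontr)
  assume "md v1 (R0 + 1 + of_nat j) v2 \<noteq> 0"
  then obtain j' :: nat where "R0 + 1 + of_nat j = bh a1 a2 + of_int N12 - of_nat j'" using T12 by blast
  then have "(of_nat (j + j' + 1) :: complex) = 0" by (simp add: R0_def algebra_simps)
  then show False by (metis of_nat_eq_0_iff add_eq_0_iff_both_eq_0 one_neq_zero)
qed

lemma v1v3_bound: "md v1 x v3 \<noteq> 0 \<Longrightarrow> Re x \<le> Re (bh a1 a3) + of_int N13"
proof -
  assume "md v1 x v3 \<noteq> 0"
  then obtain j :: nat where "x = bh a1 a3 + of_int N13 - of_nat j" using T13 by blast
  then show ?thesis by simp
qed

lemma s0_eq: "s0 = of_int (N12 + 1) + bh a1 a2" by (simp add: s0_def R0_def)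

lemma vg: "v1 \<in> Vgr sc Vh a1" "v2 \<in> Vgr sc Vh a2" "v3 \<in> Vgr sc Vh a3"
  using v1 v2 v3 by (auto intro: Vh_Vgr)

lemma LHS1_eval:
  "phi (fsum (\<lambda>i::nat. sc ((-1) ^ i * (s gchoose i)) (md v1 (X - of_nat i) (md v2 (K0 - of_nat q + of_nat i) v3))))
   = (\<Sum>i=0..q. (-1) ^ i * (s gchoose i) * phi (md v1 (X - of_nat i) (md v2 (K0 - of_nat (q - i)) v3)))"
proof -
  have "phi (fsum (\<lambda>i::nat. sc ((-1) ^ i * (s gchoose i)) (md v1 (X - of_nat i) (md v2 (K0 - of_nat q + of_nat i) v3))))
     = (\<Sum>i=0..q. phi (sc ((-1) ^ i * (s gchoose i)) (md v1 (X - of_nat i) (md v2 (K0 - of_nat q + of_nat i) v3))))"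
  proof (rule phi_fsum)
    fix i assume "i \<notin> {0..q}"
    then have "\<not> i \<le> q" by simp
    then have "md v2 (K0 - of_nat q + of_nat i) v3 = 0" using C_neg by blast
    then show "sc ((-1) ^ i * (s gchoose i)) (md v1 (X - of_nat i) (md v2 (K0 - of_nat q + of_nat i) v3)) = 0"
      by (simp add: md_zero3)
  qed simp
  also have "\<dots> = (\<Sum>i=0..q. (-1) ^ i * (s gchoose i) * phi (md v1 (X - of_nat i) (md v2 (K0 - of_nat (q - i)) v3)))"
  proof (rule sum.cong[OF refl])
    fix i assume "i \<in> {0..q}"
    then have e: "K0 - of_nat q + of_nat i = K0 - of_nat (q - i)" by (simp add: of_nat_diff)
    show "phi (sc ((-1) ^ i * (s gchoose i)) (md v1 (X - of_nat i) (md v2 (K0 - of_nat q + of_nat i) v3)))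
      = (-1) ^ i * (s gchoose i) * phi (md v1 (X - of_nat i) (md v2 (K0 - of_nat (q - i)) v3))"
      by (subst e) (rule phi_sc)
  qed
  finally show ?thesis .
qed

lemma P_vanish: "Jc < q \<Longrightarrow> Pp q = 0"
proof -
  assume q: "Jc < q"
  let ?m = "M0 + of_nat q - s0" and ?k = "K0 - of_nat q"
  have J: "fsum (\<lambda>i::nat. sc ((-1) ^ i * (s0 gchoose i)) (md v1 (?m + s0 - of_nat i) (md v2 (?k + of_nat i) v3)))
          - sc (Bfac F Om a1 a2 a3 * exp (- pi * \<i> * bh a1 a2) * (-1) powi (N12 + 1))
              (fsum (\<lambda>i::nat. sc ((-1) ^ i * (s0 gchoose i)) (md v2 (?k + s0 - of_nat i) (md v1 (?m + of_nat i) v3))))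
          = (if ?m - bh a1 a3 \<in> \<int> then
               sc (F a1 a2 a3) (fsum (\<lambda>j::nat. sc (?m gchoose j) (md (md v1 (s0 + of_nat j) v2) (?k + ?m - of_nat j) v3)))
             else 0)"
    by (rule jac_s[OF vg s0_eq])
  have r: "fsum (\<lambda>j::nat. sc (?m gchoose j) (md (md v1 (s0 + of_nat j) v2) (?k + ?m - of_nat j) v3)) = 0"
    by (rule fsum_zero) (simp add: s0_def v1v2_zero md_zero1)
  have l2: "fsum (\<lambda>i::nat. sc ((-1) ^ i * (s0 gchoose i)) (md v2 (?k + s0 - of_nat i) (md v1 (?m + of_nat i) v3))) = 0"
  proof (rule fsum_zero)
    fix i :: nat
    have "md v1 (?m + of_nat i) v3 = 0"
    proof (rule ccontr)
      assume "md v1 (?m + of_nat i) v3 \<noteq> 0"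
      then have "Re (?m + of_nat i) \<le> Re (bh a1 a3) + of_int N13" by (rule v1v3_bound)
      then have "real q \<le> of_int N13 - Re (M0 - s0 - bh a1 a3)" by simp
      then have "q \<le> Jc" unfolding Jc_def by linarith
      then show False using q by simp
    qed
    then show "sc ((-1) ^ i * (s0 gchoose i)) (md v2 (?k + s0 - of_nat i) (md v1 (?m + of_nat i) v3)) = 0"
      by (simp add: md_zero3)
  qed
  have "phi (fsum (\<lambda>i::nat. sc ((-1) ^ i * (s0 gchoose i)) (md v1 (?m + s0 - of_nat i) (md v2 (?k + of_nat i) v3)))) = 0"
    using arg_cong[OF J, of phi] r l2 by (simp add: phi_zero)
  moreover have "phi (fsum (\<lambda>i::nat. sc ((-1) ^ i * (s0 gchoose i)) (md v1 (?m + s0 - of_nat i) (md v2 (?k + of_nat i) v3))))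
      = Pp q"
  proof -
    have "?m + s0 = M0 + of_nat q" by simp
    then have "phi (fsum (\<lambda>i::nat. sc ((-1) ^ i * (s0 gchoose i)) (md v1 (?m + s0 - of_nat i) (md v2 (?k + of_nat i) v3))))
      = (\<Sum>i=0..q. (-1) ^ i * (s0 gchoose i) * phi (md v1 (M0 + of_nat q - of_nat i) (md v2 (K0 - of_nat (q - i)) v3)))"
      using LHS1_eval[of s0 "M0 + of_nat q" q] by simp
    also have "\<dots> = Pp q" unfolding Pp_def
      by (rule sum.cong[OF refl]) (auto simp: Cc_def of_nat_diff algebra_simps)
    finally show ?thesis .
  qed
  ultimately show ?thesis by simp
qed

end


lemma neg1_pow_diff: "i \<le> q \<Longrightarrow> (-1::complex) ^ (q - i) = (-1) ^ q * (-1) ^ i"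
proof -
  assume "i \<le> q"
  then have "(-1::complex) ^ q = (-1) ^ (q - i) * (-1) ^ i" by (simp add: power_add[symmetric])
  then have "(-1::complex) ^ q * (-1) ^ i = (-1) ^ (q - i) * ((-1) ^ i * (-1) ^ i)" by (simp add: mult.assoc)
  also have "(-1::complex) ^ i * (-1) ^ i = 1" by (simp add: power_add[symmetric] flip: power_mult_distrib)
  finally show ?thesis by simp
qed

lemma sign_sum: "(\<Sum>i=0..q. (a gchoose i) * ((-1) ^ (q - i) * c (q - i)))
   = (-1) ^ q * (\<Sum>i=0..q. (-1) ^ i * (a gchoose i) * (c (q - i) :: complex))"
  unfolding sum_distrib_left by (rule sum.cong[OF refl]) (simp add: neg1_pow_diff mult_ac)

context hom begin

lemma tt: "norm (z2 / z1) < 1" using zz z_nz by (simp add: norm_divide divide_less_eq)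

lemma C_series: "summable (\<lambda>j. norm (Cc j * (z2 / z1) ^ j))"
   "(\<lambda>j. Cc j * (z2 / z1) ^ j) sums ((1 - z2 / z1) powr (- s0) * (\<Sum>q\<le>Jc. Pp q * (z2 / z1) ^ q))"
proof -
  let ?t = "z2 / z1"
  define c where "c j = (-1) ^ j * Cc j" for j
  have hyp: "(\<Sum>i=0..q. (s0 gchoose i) * c (q - i)) = 0" if "Jc < q" for q
    using sign_sum[of s0 q Cc] P_vanish[OF that] by (simp add: Pp_def c_def)
  have w: "norm (- ?t) < 1" using tt by simp
  note bs = binom_series[OF hyp w]
  have sq: "(-1::complex) ^ j * (-1) ^ j = 1" for j by (induct j) simp_all
  have e1: "c j * (- ?t) ^ j = Cc j * ?t ^ j" for j
  proof -
    have "c j * (- ?t) ^ j = Cc j * ?t ^ j * ((-1) ^ j * (-1) ^ j)"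
      by (simp only: c_def power_minus[of ?t] mult_ac)
    then show ?thesis by (simp only: sq mult_1_right)
  qed
  have e2: "(\<Sum>i=0..q. (s0 gchoose i) * c (q - i)) * (- ?t) ^ q = Pp q * ?t ^ q" for q
  proof -
    have "(\<Sum>i=0..q. (s0 gchoose i) * c (q - i)) * (- ?t) ^ q = Pp q * ?t ^ q * ((-1) ^ q * (-1) ^ q)"
      unfolding c_def sign_sum[of s0 q Cc] Pp_def[symmetric] by (simp only: power_minus[of ?t] mult_ac)
    then show ?thesis by (simp only: sq mult_1_right)
  qed
  show "summable (\<lambda>j. norm (Cc j * ?t ^ j))" using bs(1) unfolding e1 .
  show "(\<lambda>j. Cc j * ?t ^ j) sums ((1 - ?t) powr (- s0) * (\<Sum>q\<le>Jc. Pp q * ?t ^ q))"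
    using bs(2) unfolding e1 e2 by simp
qed

lemma prod_has_sum: "(prod_term Vh md phi v1 v2 v3 z1 z2 has_sum
   (cpw z1 (- M0 - 1) * cpw z2 (- K0 - 1) * ((1 - z2 / z1) powr (- s0) * (\<Sum>q\<le>Jc. Pp q * (z2 / z1) ^ q)))) UNIV"
proof (rule has_sum_shift_complex[where nb = "w2 + w3 - K0 - 1"])
  show "prod_term Vh md phi v1 v2 v3 z1 z2 (w2 + w3 - K0 - 1 + of_nat j)
      = cpw z1 (- M0 - 1) * cpw z2 (- K0 - 1) * (Cc j * (z2 / z1) ^ j)" for j
    by (simp only: prod_at prod_g)
  show "n \<notin> range (\<lambda>j. w2 + w3 - K0 - 1 + of_nat j) \<Longrightarrow> prod_term Vh md phi v1 v2 v3 z1 z2 n = 0" for n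
    by (rule prod_off)
  show "summable (\<lambda>j. norm (cpw z1 (- M0 - 1) * cpw z2 (- K0 - 1) * (Cc j * (z2 / z1) ^ j)))"
    using summable_mult[OF C_series(1), of "norm (cpw z1 (- M0 - 1) * cpw z2 (- K0 - 1))"]
    by (simp add: norm_mult mult_ac)
  show "(\<lambda>j. cpw z1 (- M0 - 1) * cpw z2 (- K0 - 1) * (Cc j * (z2 / z1) ^ j)) sums
    (cpw z1 (- M0 - 1) * cpw z2 (- K0 - 1) * ((1 - z2 / z1) powr (- s0) * (\<Sum>q\<le>Jc. Pp q * (z2 / z1) ^ q)))"
    by (rule sums_mult[OF C_series(2)])
qed

end


context hom begin

abbreviation "z0 \<equiv> z1 - z2"

lemma v1v2_wt: "md v1 r v2 \<in> Vh (a1 + a2) (w1 + w2 - r - 1)" by (rule wt[OF v1 v2])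

lemma phi_v1v2_v3: "phi (md (md v1 r v2) s v3) \<noteq> 0 \<Longrightarrow> s = S0 + R0 - r"
proof -
  assume ne: "phi (md (md v1 r v2) s v3) \<noteq> 0"
  have "md (md v1 r v2) s v3 \<in> Vh (a1 + a2 + a3) ((w1 + w2 - r - 1) + w3 - s - 1)"
    by (rule wt[OF v1v2_wt v3])
  then have "(w1 + w2 - r - 1) + w3 - s - 1 = n'" using phi_wt ne by blast
  then show ?thesis by (simp add: S0_def algebra_simps)
qed

lemma iter_at: "iter_term Vh md phi v1 v2 v3 z0 z2 (w1 + w2 - R0 - 1 + of_nat j)
    = Dd j * cpw z0 (- (R0 - of_nat j) - 1) * cpw z2 (- (S0 + of_nat j) - 1)"
  unfolding iter_term_def
proof (subst fsum_single[where a="(R0 - of_nat j, S0 + of_nat j)"])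
  fix x assume x: "x \<noteq> (R0 - of_nat j, S0 + of_nat j)"
  obtain r s :: complex where rs: "x = (r, s)" by force
  show "(case x of (r, s) \<Rightarrow> phi (md (wtproj Vh (w1 + w2 - R0 - 1 + of_nat j) (md v1 r v2)) s v3) * cpw z0 (- r - 1) * cpw z2 (- s - 1)) = 0"
  proof (cases "w1 + w2 - R0 - 1 + of_nat j = w1 + w2 - r - 1")
    case True
    then have r: "r = R0 - of_nat j" by (simp add: algebra_simps)
    then have "s \<noteq> S0 + of_nat j" using x rs by auto
    then have "phi (md (md v1 r v2) s v3) = 0" using phi_v1v2_v3[of r s] r by auto
    then show ?thesis using True rs by (simp add: wtproj_hom[OF v1v2_wt])
  next
    case False
    then show ?thesis using rs by (simp add: wtproj_hom[OF v1v2_wt] md_zero1 phi_zero)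
  qed
next
  show "(case (R0 - of_nat j, S0 + of_nat j) of (r, s) \<Rightarrow> phi (md (wtproj Vh (w1 + w2 - R0 - 1 + of_nat j) (md v1 r v2)) s v3) * cpw z0 (- r - 1) * cpw z2 (- s - 1))
    = Dd j * cpw z0 (- (R0 - of_nat j) - 1) * cpw z2 (- (S0 + of_nat j) - 1)"
    by (simp add: wtproj_hom[OF v1v2_wt] Dd_def)
qed

lemma iter_off: "n \<notin> range (\<lambda>j::nat. w1 + w2 - R0 - 1 + of_nat j) \<Longrightarrow> iter_term Vh md phi v1 v2 v3 z0 z2 n = 0"
  unfolding iter_term_def
proof (rule fsum_zero)
  assume n: "n \<notin> range (\<lambda>j::nat. w1 + w2 - R0 - 1 + of_nat j)"
  fix x obtain r s :: complex where rs: "x = (r, s)" by force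
  have "md (wtproj Vh n (md v1 r v2)) s v3 = 0"
  proof (cases "n = w1 + w2 - r - 1 \<and> md v1 r v2 \<noteq> 0")
    case True
    then obtain j :: nat where "r = R0 - of_nat j" using T12 unfolding R0_def by blast
    then have "n = w1 + w2 - R0 - 1 + of_nat j" using True by simp
    then show ?thesis using n by auto
  next
    case False
    then show ?thesis by (auto simp: wtproj_hom[OF v1v2_wt] md_zero1)
  qed
  then show "(case x of (r, s) \<Rightarrow> phi (md (wtproj Vh n (md v1 r v2)) s v3) * cpw z0 (- r - 1) * cpw z2 (- s - 1)) = 0"
    using rs by (simp add: phi_zero)
qed

lemma iter_g: "Dd j * cpw z0 (- (R0 - of_nat j) - 1) * cpw z2 (- (S0 + of_nat j) - 1)
   = cpw z0 (- R0 - 1) * cpw z2 (- S0 - 1) * (Dd j * (z0 / z2) ^ j)"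
proof -
  have e: "- (R0 - of_nat j) - 1 = (- R0 - 1) + of_nat j" "- (S0 + of_nat j) - 1 = (- S0 - 1) - of_nat j" by simp_all
  have a: "cpw z0 (- (R0 - of_nat j) - 1) = cpw z0 (- R0 - 1) * z0 ^ j"
    unfolding e(1) by (rule cpw_add_nat[OF z_nz(3)])
  have b: "cpw z2 (- (S0 + of_nat j) - 1) = cpw z2 (- S0 - 1) * (inverse z2) ^ j"
    unfolding e(2) by (rule cpw_diff_nat[OF z_nz(2)])
  show ?thesis unfolding a b by (simp add: power_mult_distrib power_inverse mult_ac divide_inverse)
qed

definition "LH m q = fsum (\<lambda>i::nat. sc ((-1) ^ i * ((R0 - of_nat q) gchoose i))
      (md v1 (m + (R0 - of_nat q) - of_nat i) (md v2 ((S0 + of_nat q - m) + of_nat i) v3)))"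

lemma R0q: "R0 - of_nat q = of_int (N12 - int q) + bh a1 a2" by (simp add: R0_def)

lemma assoc_gen:
  assumes m: "\<And>i. md v1 (m + of_nat i) v3 = 0"
  shows "phi (LH m q) = (if m - bh a1 a3 \<in> \<int> then F a1 a2 a3 * (\<Sum>j=0..q. (m gchoose j) * Dd (q - j)) else 0)"
proof -
  let ?s = "R0 - of_nat q" and ?k = "S0 + of_nat q - m"
  have J: "fsum (\<lambda>i::nat. sc ((-1) ^ i * (?s gchoose i)) (md v1 (m + ?s - of_nat i) (md v2 (?k + of_nat i) v3)))
          - sc (Bfac F Om a1 a2 a3 * exp (- pi * \<i> * bh a1 a2) * (-1) powi (N12 - int q))
              (fsum (\<lambda>i::nat. sc ((-1) ^ i * (?s gchoose i)) (md v2 (?k + ?s - of_nat i) (md v1 (m + of_nat i) v3))))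
          = (if m - bh a1 a3 \<in> \<int> then
               sc (F a1 a2 a3) (fsum (\<lambda>j::nat. sc (m gchoose j) (md (md v1 (?s + of_nat j) v2) (?k + m - of_nat j) v3)))
             else 0)"
    by (rule jac_s[OF vg R0q])
  have l2: "fsum (\<lambda>i::nat. sc ((-1) ^ i * (?s gchoose i)) (md v2 (?k + ?s - of_nat i) (md v1 (m + of_nat i) v3))) = 0"
    by (rule fsum_zero) (simp add: m md_zero3)
  have r: "phi (fsum (\<lambda>j::nat. sc (m gchoose j) (md (md v1 (?s + of_nat j) v2) (?k + m - of_nat j) v3)))
      = (\<Sum>j=0..q. (m gchoose j) * Dd (q - j))"
  proof -
    have "phi (fsum (\<lambda>j::nat. sc (m gchoose j) (md (md v1 (?s + of_nat j) v2) (?k + m - of_nat j) v3)))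
       = (\<Sum>j=0..q. phi (sc (m gchoose j) (md (md v1 (?s + of_nat j) v2) (?k + m - of_nat j) v3)))"
    proof (rule phi_fsum)
      fix j assume "j \<notin> {0..q}"
      then have e: "?s + of_nat j = R0 + 1 + of_nat (j - q - 1)" by (simp add: of_nat_diff)
      show "sc (m gchoose j) (md (md v1 (?s + of_nat j) v2) (?k + m - of_nat j) v3) = 0"
        unfolding e by (simp add: v1v2_zero md_zero1)
    qed simp
    also have "\<dots> = (\<Sum>j=0..q. (m gchoose j) * Dd (q - j))"
    proof (rule sum.cong[OF refl])
      fix j assume "j \<in> {0..q}"
      then have e: "?s + of_nat j = R0 - of_nat (q - j)" "?k + m - of_nat j = S0 + of_nat (q - j)"
        by (simp_all add: of_nat_diff)
      show "phi (sc (m gchoose j) (md (md v1 (?s + of_nat j) v2) (?k + m - of_nat j) v3)) = (m gchoose j) * Dd (q - j)"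
        unfolding e Dd_def by (rule phi_sc)
    qed
    finally show ?thesis .
  qed
  have "phi (LH m q) = phi (fsum (\<lambda>i::nat. sc ((-1) ^ i * (?s gchoose i)) (md v1 (m + ?s - of_nat i) (md v2 (?k + of_nat i) v3))))"
    unfolding LH_def by simp
  also have "\<dots> = phi (if m - bh a1 a3 \<in> \<int> then
               sc (F a1 a2 a3) (fsum (\<lambda>j::nat. sc (m gchoose j) (md (md v1 (?s + of_nat j) v2) (?k + m - of_nat j) v3)))
             else 0)"
    using J l2 by simp
  also have "\<dots> = (if m - bh a1 a3 \<in> \<int> then F a1 a2 a3 * (\<Sum>j=0..q. (m gchoose j) * Dd (q - j)) else 0)"
    using r by (simp add: phi_sc phi_zero)
  finally show ?thesis .
qed

end


context hom begin

lemma mm_v1v3: "md v1 (mm + of_nat i) v3 = 0"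
proof (rule ccontr)
  assume "md v1 (mm + of_nat i) v3 \<noteq> 0"
  then have "Re (mm + of_nat i) \<le> Re (bh a1 a3) + of_int N13" by (rule v1v3_bound)
  moreover have "real hh > of_int N13 - Re (M0 - R0 - bh a1 a3)" unfolding hh_def by linarith
  ultimately show False by (simp add: mm_def)
qed

definition "Lf q = (if q \<le> hh then (\<Sum>i=0..hh-q. (-1) ^ i * ((s0 - 1 - of_nat q) gchoose i) * Cc (hh - q - i)) else 0)"

lemma LH_mm: "phi (LH mm q) = Lf q"
proof (cases "q \<le> hh")
  case True
  have e1: "mm + (R0 - of_nat q) = M0 + of_nat (hh - q)" "S0 + of_nat q - mm = K0 - of_nat (hh - q)"
    using True SR by (simp_all add: mm_def of_nat_diff algebra_simps)
  have "phi (LH mm q) = (\<Sum>i=0..hh-q. (-1) ^ i * ((R0 - of_nat q) gchoose i) * phi (md v1 (M0 + of_nat (hh - q) - of_nat i) (md v2 (K0 - of_nat (hh - q - i)) v3)))"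
    unfolding LH_def e1 by (rule LHS1_eval)
  also have "\<dots> = (\<Sum>i=0..hh-q. (-1) ^ i * ((s0 - 1 - of_nat q) gchoose i) * Cc (hh - q - i))"
  proof (rule sum.cong[OF refl])
    fix i assume i: "i \<in> {0..hh-q}"
    have "of_nat (hh - q - i) = (of_nat (hh - q) - of_nat i :: complex)" by (rule of_nat_diff) (use i in simp)
    then have a: "M0 + of_nat (hh - q) - of_nat i = M0 + of_nat (hh - q - i)" by simp
    have b: "R0 - of_nat q = s0 - 1 - of_nat q" by (simp add: s0_def)
    show "(-1) ^ i * ((R0 - of_nat q) gchoose i) * phi (md v1 (M0 + of_nat (hh - q) - of_nat i) (md v2 (K0 - of_nat (hh - q - i)) v3))
        = (-1) ^ i * ((s0 - 1 - of_nat q) gchoose i) * Cc (hh - q - i)"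
      unfolding a b Cc_def ..
  qed
  also have "\<dots> = Lf q" using True by (simp add: Lf_def)
  finally show ?thesis .
next
  case False
  have e1: "S0 + of_nat q - mm = K0 - of_nat 0 + of_nat (q - hh)"
    using False SR by (simp add: mm_def of_nat_diff algebra_simps)
  have "LH mm q = 0" unfolding LH_def e1
  proof (rule fsum_zero)
    fix i :: nat
    have "md v2 (K0 - of_nat 0 + of_nat (q - hh + i)) v3 = 0" using C_neg False by fastforce
    then show "sc ((-1) ^ i * ((R0 - of_nat q) gchoose i)) (md v1 (mm + (R0 - of_nat q) - of_nat i) (md v2 (K0 - of_nat 0 + of_nat (q - hh) + of_nat i) v3)) = 0"
      by (simp add: md_zero3 add.assoc)
  qed
  then show ?thesis using False by (simp add: Lf_def phi_zero)
qed

lemma Lf_closed: "q \<le> hh \<Longrightarrow> Lf q = (\<Sum>i=0..hh-q. of_nat ((i + q) choose i) * Pp (hh - q - i))"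
  unfolding Lf_def Pp_def using Lq_closed[where C=Cc and sz=s0 and q=q and h=hh] by simp

lemma Jc_hh: "Jc \<le> hh" by (simp add: hh_def)

lemma Lf_poly: "(\<Sum>q\<le>hh. Lf q * u ^ q) = (\<Sum>p\<le>Jc. Pp p * (1 + u) ^ (hh - p))"
proof -
  have "(\<Sum>q\<le>hh. Lf q * u ^ q) = (\<Sum>q\<le>hh. (\<Sum>i=0..hh-q. of_nat ((i + q) choose i) * Pp (hh - q - i)) * u ^ q)"
    by (rule sum.cong[OF refl]) (simp add: Lf_closed)
  also have "\<dots> = (\<Sum>p\<le>Jc. Pp p * (1 + u) ^ (hh - p))"
    by (rule Lq_poly[OF Jc_hh P_vanish])
  finally show ?thesis .
qed

lemma u_small: "norm (z0 / z2) < 1" using zz z_nz by (simp add: norm_divide divide_less_eq)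

lemma caseA_D:
  assumes A: "mm - bh a1 a3 \<in> \<int>"
  shows "summable (\<lambda>j. norm (Dd j * (z0 / z2) ^ j))"
    "(\<lambda>j. Dd j * (z0 / z2) ^ j) sums ((1 + z0 / z2) powr (- mm) * (inverse (F a1 a2 a3) * (\<Sum>p\<le>Jc. Pp p * (1 + z0 / z2) ^ (hh - p))))"
proof -
  have Fz: "F a1 a2 a3 \<noteq> 0" by (rule F_nz)
  have rel: "(\<Sum>j=0..q. (mm gchoose j) * Dd (q - j)) = inverse (F a1 a2 a3) * Lf q" for q
    using assoc_gen[OF mm_v1v3, of q] LH_mm[of q] A Fz by (simp add: field_simps)
  have hyp: "hh < q \<Longrightarrow> (\<Sum>j=0..q. (mm gchoose j) * Dd (q - j)) = 0" for q
    by (simp add: rel Lf_def)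
  note bs = binom_series[where J=hh and alpha=mm and c=Dd, OF hyp u_small]
  show "summable (\<lambda>j. norm (Dd j * (z0 / z2) ^ j))" by (rule bs(1))
  have "(\<Sum>q\<le>hh. (\<Sum>j=0..q. (mm gchoose j) * Dd (q - j)) * (z0 / z2) ^ q)
     = inverse (F a1 a2 a3) * (\<Sum>p\<le>Jc. Pp p * (1 + z0 / z2) ^ (hh - p))"
    by (simp add: rel sum_distrib_left mult.assoc Lf_poly[symmetric])
  then show "(\<lambda>j. Dd j * (z0 / z2) ^ j) sums ((1 + z0 / z2) powr (- mm) * (inverse (F a1 a2 a3) * (\<Sum>p\<le>Jc. Pp p * (1 + z0 / z2) ^ (hh - p))))"
    using bs(2) by simp
qed

end


lemma tri_zero:
  fixes x :: "nat \<Rightarrow> complex"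
  assumes h: "\<And>q. q \<le> H \<Longrightarrow> (\<Sum>i=0..q. a q i * x (q - i)) = 0" and a0: "\<And>q. a q 0 = 1"
  shows "q \<le> H \<Longrightarrow> x q = 0"
proof (induction q rule: less_induct)
  case (less q)
  have "(\<Sum>i=0..q. a q i * x (q - i)) = a q 0 * x (q - 0) + (\<Sum>i=Suc 0..q. a q i * x (q - i))"
    by (rule sum.atLeast_Suc_atMost) simp
  also have "(\<Sum>i=Suc 0..q. a q i * x (q - i)) = 0"
    by (rule sum.neutral) (use less in auto)
  finally show ?case using h[OF less.prems] a0 by simp
qed

context hom begin

lemma powr_combine:
  fixes x a :: complex
  assumes "x \<noteq> 0" shows "x powr a * x ^ n = x powr (a + of_nat n)"
proof -
  have "exp (of_nat n * ln x) = x ^ n" using assms by (simp add: exp_of_nat_mult)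
  then show ?thesis using assms by (simp add: powr_def exp_add distrib_right)
qed

lemma caseB:
  assumes B: "mm - bh a1 a3 \<notin> \<int>"
  shows "Pp p = 0" "Dd j = 0"
proof -
  have Fz: "F a1 a2 a3 \<noteq> 0" by (rule F_nz)
  have L0: "Lf q = 0" for q
    using assoc_gen[OF mm_v1v3, of q] LH_mm[of q] B by simp
  have Pl: "Pp p = 0" if "p \<le> hh" for p
  proof (rule tri_zero[where H=hh and a="\<lambda>p i. of_nat ((i + (hh - p)) choose i)" and x=Pp, OF _ _ that])
    fix q assume q: "q \<le> hh"
    have "Lf (hh - q) = (\<Sum>i=0..hh-(hh-q). of_nat ((i + (hh - q)) choose i) * Pp (hh - (hh - q) - i))"
      by (rule Lf_closed) simp
    then show "(\<Sum>i=0..q. of_nat ((i + (hh - q)) choose i) * Pp (q - i)) = 0" using q L0 by simp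
  qed simp
  show "Pp p = 0"
  proof (cases "p \<le> hh")
    case False then show ?thesis using Jc_hh P_vanish by simp
  qed (rule Pl)
  define hb where "hb = nat N13 + 1"
  define m' where "m' = bh a1 a3 + of_nat hb"
  have m'v: "md v1 (m' + of_nat i) v3 = 0" for i
  proof (rule ccontr)
    assume "md v1 (m' + of_nat i) v3 \<noteq> 0"
    then have "Re (m' + of_nat i) \<le> Re (bh a1 a3) + of_int N13" by (rule v1v3_bound)
    then show False by (simp add: m'_def hb_def)
  qed
  have LH0: "LH m' q = 0" for q
    unfolding LH_def
  proof (rule fsum_zero)
    fix i :: nat
    have "md v2 ((S0 + of_nat q - m') + of_nat i) v3 = 0"
    proof (rule ccontr)
      assume "md v2 ((S0 + of_nat q - m') + of_nat i) v3 \<noteq> 0"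
      then obtain j :: nat where "(S0 + of_nat q - m') + of_nat i = K0 - of_nat j" using T23 unfolding K0_def by blast
      then have "mm - bh a1 a3 = of_nat hh + of_nat hb - of_nat q - of_nat i - of_nat j"
        using SR unfolding mm_def m'_def by algebra
      then have "mm - bh a1 a3 \<in> \<int>" by simp
      then show False using B by simp
    qed
    then show "sc ((-1) ^ i * ((R0 - of_nat q) gchoose i)) (md v1 (m' + (R0 - of_nat q) - of_nat i) (md v2 (S0 + of_nat q - m' + of_nat i) v3)) = 0"
      by (simp add: md_zero3)
  qed
  have Dr: "(\<Sum>j=0..q. (m' gchoose j) * Dd (q - j)) = 0" for q
    using assoc_gen[OF m'v, of q] LH0[of q] Fz by (simp add: m'_def phi_zero)
  show "Dd j = 0"
    by (rule tri_zero[where H=j and a="\<lambda>q i. m' gchoose i", OF Dr]) simp_all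
qed

lemma iter_has_sum_gen:
  assumes "summable (\<lambda>j. norm (Dd j * (z0 / z2) ^ j))" "(\<lambda>j. Dd j * (z0 / z2) ^ j) sums X"
  shows "(iter_term Vh md phi v1 v2 v3 z0 z2 has_sum (cpw z0 (- R0 - 1) * cpw z2 (- S0 - 1) * X)) UNIV"
proof (rule has_sum_shift_complex[where nb = "w1 + w2 - R0 - 1"])
  show "iter_term Vh md phi v1 v2 v3 z0 z2 (w1 + w2 - R0 - 1 + of_nat j)
      = cpw z0 (- R0 - 1) * cpw z2 (- S0 - 1) * (Dd j * (z0 / z2) ^ j)" for j
    by (simp only: iter_at iter_g)
  show "n \<notin> range (\<lambda>j. w1 + w2 - R0 - 1 + of_nat j) \<Longrightarrow> iter_term Vh md phi v1 v2 v3 z0 z2 n = 0" for n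
    by (rule iter_off)
  show "summable (\<lambda>j. norm (cpw z0 (- R0 - 1) * cpw z2 (- S0 - 1) * (Dd j * (z0 / z2) ^ j)))"
    using summable_mult[OF assms(1), of "norm (cpw z0 (- R0 - 1) * cpw z2 (- S0 - 1))"]
    by (simp add: norm_mult mult_ac)
  show "(\<lambda>j. cpw z0 (- R0 - 1) * cpw z2 (- S0 - 1) * (Dd j * (z0 / z2) ^ j)) sums (cpw z0 (- R0 - 1) * cpw z2 (- S0 - 1) * X)"
    by (rule sums_mult[OF assms(2)])
qed

end


context hom begin

definition "Sp = cpw z1 (- M0 - 1) * cpw z2 (- K0 - 1) * ((1 - z2 / z1) powr (- s0) * (\<Sum>q\<le>Jc. Pp q * (z2 / z1) ^ q))"

lemma Afac_eq: "Afac F Om z1 z2 a1 a2 a3 = exp (2 * pi * \<i> * bh a1 a2) powi (- pint z1 z2)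
    * exp (2 * pi * \<i> * bh a1 a3) powi (pint z2 (z2 - z1)) * inverse (F a1 a2 a3)"
  unfolding Afac_def P1[rule_format] ..

lemma hom_main:
  "(iter_term Vh md phi v1 v2 v3 z0 z2 has_sum (Afac F Om z1 z2 a1 a2 a3 * Sp)) UNIV
   \<and> (prod_term Vh md phi v1 v2 v3 z1 z2 has_sum Sp) UNIV"
proof (cases "mm - bh a1 a3 \<in> \<int>")
  case True
  let ?u = "z0 / z2" and ?t = "z2 / z1"
  define E where "E = exp (2 * pi * \<i> * bh a1 a2) powi (- pint z1 z2) * exp (2 * pi * \<i> * bh a1 a3) powi (pint z2 (z2 - z1))"
  have u1: "1 + ?u \<noteq> 0" using u_small by (metis add.inverse_unique norm_minus_cancel norm_one order_less_irrefl)
  have t1: "1 - ?t \<noteq> 0" using tt by auto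
  have h1: "lg z0 = lg z1 + Ln (1 - z2 / z1) + 2 * pi * \<i> * of_int (pint z1 z2)"
    using pint_prop[of z2 z1] zz z_nz by simp
  have h2': "lg (z2 - (z2 - z1)) = lg z2 + Ln (1 - (z2 - z1) / z2) + 2 * pi * \<i> * of_int (pint z2 (z2 - z1))"
    by (rule pint_prop) (use zz z_nz in \<open>auto simp: norm_minus_commute\<close>)
  have "(z2 - z1) / z2 = - ((z1 - z2) / z2)" by (simp add: minus_divide_left)
  then have h2: "lg z1 = lg z2 + Ln (1 + z0 / z2) + 2 * pi * \<i> * of_int (pint z2 (z2 - z1))"
    using h2' by simp
  have i1: "R0 + 1 - bh a1 a2 \<in> \<int>" by (simp add: R0_def)
  have i2: "bh a1 a3 + R0 - M0 \<in> \<int>"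
  proof -
    have e: "bh a1 a3 + R0 - M0 = of_nat hh - (mm - bh a1 a3)" by (simp add: mm_def)
    show ?thesis unfolding e by (rule Ints_diff[OF Ints_of_nat True])
  qed
  have br: "cpw z0 (- R0 - 1) * cpw z2 (- S0 - 1) * (1 + ?u) powr (R0 - M0 - of_nat p)
     = E * (cpw z1 (- M0 - 1) * cpw z2 (- K0 - 1) * (1 - ?t) powr (- (R0 + 1)) * ?t ^ p)" for p
    unfolding E_def by (rule branch[OF z_nz(3) z_nz(1) z_nz(2) t1 u1 h1 h2 i1 i2 SR])
  have pc: "(1 + ?u) powr (- mm) * (1 + ?u) ^ (hh - p) = (1 + ?u) powr (R0 - M0 - of_nat p)" if "p \<le> Jc" for p
  proof -
    have "p \<le> hh" using that Jc_hh by simp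
    then have "- mm + of_nat (hh - p) = R0 - M0 - of_nat p" by (simp add: mm_def of_nat_diff)
    then show ?thesis using powr_combine[OF u1, of "- mm" "hh - p"] by simp
  qed
  note D = caseA_D[OF True]
  have "(iter_term Vh md phi v1 v2 v3 z0 z2 has_sum
      (cpw z0 (- R0 - 1) * cpw z2 (- S0 - 1) * ((1 + ?u) powr (- mm) * (inverse (F a1 a2 a3) * (\<Sum>p\<le>Jc. Pp p * (1 + ?u) ^ (hh - p)))))) UNIV"
    by (rule iter_has_sum_gen[OF D])
  moreover have "cpw z0 (- R0 - 1) * cpw z2 (- S0 - 1) * ((1 + ?u) powr (- mm) * (inverse (F a1 a2 a3) * (\<Sum>p\<le>Jc. Pp p * (1 + ?u) ^ (hh - p))))
      = Afac F Om z1 z2 a1 a2 a3 * Sp"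
  proof -
    have "cpw z0 (- R0 - 1) * cpw z2 (- S0 - 1) * ((1 + ?u) powr (- mm) * (inverse (F a1 a2 a3) * (\<Sum>p\<le>Jc. Pp p * (1 + ?u) ^ (hh - p))))
        = (\<Sum>p\<le>Jc. inverse (F a1 a2 a3) * Pp p * (cpw z0 (- R0 - 1) * cpw z2 (- S0 - 1) * ((1 + ?u) powr (- mm) * (1 + ?u) ^ (hh - p))))"
      by (simp add: sum_distrib_left mult_ac)
    also have "\<dots> = (\<Sum>p\<le>Jc. inverse (F a1 a2 a3) * Pp p * (E * (cpw z1 (- M0 - 1) * cpw z2 (- K0 - 1) * (1 - ?t) powr (- (R0 + 1)) * ?t ^ p)))"
      by (rule sum.cong[OF refl]) (simp add: pc br)
    also have "\<dots> = Afac F Om z1 z2 a1 a2 a3 * Sp"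
      unfolding Afac_eq Sp_def E_def s0_def by (simp add: sum_distrib_left mult_ac)
    finally show ?thesis .
  qed
  ultimately show ?thesis using prod_has_sum unfolding Sp_def by simp
next
  case False
  have "(iter_term Vh md phi v1 v2 v3 z0 z2 has_sum (cpw z0 (- R0 - 1) * cpw z2 (- S0 - 1) * 0)) UNIV"
    by (rule iter_has_sum_gen) (simp_all add: caseB[OF False])
  moreover have "Sp = 0" unfolding Sp_def by (simp add: caseB[OF False])
  ultimately show ?thesis using prod_has_sum[folded Sp_def] by simp
qed

end


lemma nat_of_eq_fin: "finite {j::nat. (of_nat j :: complex) = c}"
proof (rule finite_subset[of _ "{nat \<lfloor>Re c\<rfloor>}"])
  show "{j::nat. (of_nat j :: complex) = c} \<subseteq> {nat \<lfloor>Re c\<rfloor>}"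
  proof
    fix j assume "j \<in> {j::nat. (of_nat j :: complex) = c}"
    then have "Re c = real j" by auto
    then show "j \<in> {nat \<lfloor>Re c\<rfloor>}" by simp
  qed
qed simp

context hom begin

lemma prod_supp: "finite {x. (case x of (m, k) \<Rightarrow> phi (md v1 m (wtproj Vh n (md v2 k v3))) * cpw z1 (- m - 1) * cpw z2 (- k - 1)) \<noteq> 0}"
proof (rule finite_subset)
  show "{x. (case x of (m, k) \<Rightarrow> phi (md v1 m (wtproj Vh n (md v2 k v3))) * cpw z1 (- m - 1) * cpw z2 (- k - 1)) \<noteq> 0}
     \<subseteq> (\<lambda>j. (M0 + of_nat j, K0 - of_nat j)) ` {j::nat. of_nat j = n - (w2 + w3 - K0 - 1)}"
  proof
    fix x assume x: "x \<in> {x. (case x of (m, k) \<Rightarrow> phi (md v1 m (wtproj Vh n (md v2 k v3))) * cpw z1 (- m - 1) * cpw z2 (- k - 1)) \<noteq> 0}"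
    obtain m k :: complex where mk: "x = (m, k)" by force
    have ne: "phi (md v1 m (wtproj Vh n (md v2 k v3))) \<noteq> 0" using x mk by auto
    then have n: "n = w2 + w3 - k - 1" by (auto simp: wtproj_hom[OF v2v3_wt] md_zero3 phi_zero split: if_splits)
    then have ne2: "phi (md v1 m (md v2 k v3)) \<noteq> 0" using ne by (simp add: wtproj_hom[OF v2v3_wt])
    then have "md v2 k v3 \<noteq> 0" by (auto simp: md_zero3 phi_zero)
    then obtain j :: nat where k: "k = K0 - of_nat j" using T23 unfolding K0_def by blast
    have m: "m = M0 + of_nat j" using phi_v1v2v3[OF ne2] k by simp
    show "x \<in> (\<lambda>j. (M0 + of_nat j, K0 - of_nat j)) ` {j::nat. of_nat j = n - (w2 + w3 - K0 - 1)}"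
      using mk k m n by auto
  qed
  show "finite ((\<lambda>j. (M0 + of_nat j, K0 - of_nat j)) ` {j::nat. of_nat j = n - (w2 + w3 - K0 - 1)})"
    using nat_of_eq_fin by blast
qed

lemma iter_supp: "finite {x. (case x of (r, s) \<Rightarrow> phi (md (wtproj Vh n (md v1 r v2)) s v3) * cpw z0 (- r - 1) * cpw z2 (- s - 1)) \<noteq> 0}"
proof (rule finite_subset)
  show "{x. (case x of (r, s) \<Rightarrow> phi (md (wtproj Vh n (md v1 r v2)) s v3) * cpw z0 (- r - 1) * cpw z2 (- s - 1)) \<noteq> 0}
     \<subseteq> (\<lambda>j. (R0 - of_nat j, S0 + of_nat j)) ` {j::nat. of_nat j = n - (w1 + w2 - R0 - 1)}"
  proof
    fix x assume x: "x \<in> {x. (case x of (r, s) \<Rightarrow> phi (md (wtproj Vh n (md v1 r v2)) s v3) * cpw z0 (- r - 1) * cpw z2 (- s - 1)) \<noteq> 0}"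
    obtain r s :: complex where rs: "x = (r, s)" by force
    have ne: "phi (md (wtproj Vh n (md v1 r v2)) s v3) \<noteq> 0" using x rs by auto
    then have n: "n = w1 + w2 - r - 1" by (auto simp: wtproj_hom[OF v1v2_wt] md_zero1 phi_zero split: if_splits)
    then have ne2: "phi (md (md v1 r v2) s v3) \<noteq> 0" using ne by (simp add: wtproj_hom[OF v1v2_wt])
    then have "md v1 r v2 \<noteq> 0" by (auto simp: md_zero1 phi_zero)
    then obtain j :: nat where r: "r = R0 - of_nat j" using T12 unfolding R0_def by blast
    have s: "s = S0 + of_nat j" using phi_v1v2_v3[OF ne2] r by simp
    show "x \<in> (\<lambda>j. (R0 - of_nat j, S0 + of_nat j)) ` {j::nat. of_nat j = n - (w1 + w2 - R0 - 1)}"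
      using rs r s n by auto
  qed
  show "finite ((\<lambda>j. (R0 - of_nat j, S0 + of_nat j)) ` {j::nat. of_nat j = n - (w1 + w2 - R0 - 1)})"
    using nat_of_eq_fin by blast
qed

end

context aia begin

lemma trunc_int:
  assumes "x \<in> Vgr sc Vh a" "y \<in> Vgr sc Vh b"
  shows "\<exists>N::int. \<forall>k. md x k y \<noteq> 0 \<longrightarrow> (\<exists>j::nat. k = bh a b + of_int N - of_nat j)"
proof -
  obtain N :: real where N: "\<And>k. k - bh a b \<in> \<int> \<Longrightarrow> Re (k - bh a b) > N \<Longrightarrow> md x k y = 0"
    using trunc[OF assms] by blast
  have nz: "\<And>k. k - bh a b \<notin> \<int> \<Longrightarrow> md x k y = 0" using trunc[OF assms] by blast
  show ?thesis
  proof (rule exI[of _ "\<lceil>N\<rceil>"], intro allI impI)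
    fix k assume ne: "md x k y \<noteq> 0"
    then have "k - bh a b \<in> \<int>" using nz by blast
    then obtain z :: int where z: "k - bh a b = of_int z" by (auto elim: Ints_cases)
    have "\<not> Re (k - bh a b) > N" using N[OF \<open>k - bh a b \<in> \<int>\<close>] ne by blast
    then have "real_of_int z \<le> N" using z by simp
    then have "z \<le> \<lceil>N\<rceil>" by linarith
    then have "of_nat (nat (\<lceil>N\<rceil> - z)) = (of_int (\<lceil>N\<rceil> - z) :: complex)" by simp
    then have "k = bh a b + of_int \<lceil>N\<rceil> - of_nat (nat (\<lceil>N\<rceil> - z))" using z by (simp add: algebra_simps)
    then show "\<exists>j::nat. k = bh a b + of_int \<lceil>N\<rceil> - of_nat j" by blast
  qed
qed

lemma Vgr_decomp:
  assumes "v \<in> Vgr sc Vh a"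
  shows "\<exists>N. finite N \<and> v = (\<Sum>n\<in>N. cp v (a, n))"
proof -
  let ?S = "{p. cp v p \<noteq> 0}"
  have S: "?S = (\<lambda>n. (a, n)) ` (snd ` ?S)"
  proof -
    have "fst p = a" if "p \<in> ?S" for p
      using that Vgr_comp[OF assms, of "fst p" "snd p"] by (cases "fst p = a") auto
    then show ?thesis by force
  qed
  have "v = sum (cp v) ?S" by (rule cp_sum_eq)
  also have "\<dots> = sum (cp v) ((\<lambda>n. (a, n)) ` (snd ` ?S))" using S by simp
  also have "\<dots> = (\<Sum>n\<in>snd ` ?S. cp v (a, n))" by (subst sum.reindex) (auto simp: inj_on_def)
  finally show ?thesis using cp_fin by blast
qed

end


lemma add_sum:
  fixes f :: "'a::comm_monoid_add \<Rightarrow> 'b::ab_group_add"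
  shows "(\<And>a b. f (a + b) = f a + f b) \<Longrightarrow> f (sum g I) = (\<Sum>i\<in>I. f (g i))"
proof -
  assume add: "\<And>a b. f (a + b) = f a + f b"
  have f0: "f 0 = 0" using add[of 0 0] by simp
  show ?thesis by (induction I rule: infinite_finite_induct) (auto simp: f0 add)
qed

lemma fsum_sumI:
  assumes I: "finite I" and fin: "\<And>i. i \<in> I \<Longrightarrow> finite {x. f i x \<noteq> 0}"
  shows "fsum (\<lambda>x. \<Sum>i\<in>I. f i x) = (\<Sum>i\<in>I. fsum (f i))" and "finite {x. (\<Sum>i\<in>I. f i x) \<noteq> (0::'b::comm_monoid_add)}"
proof -
  define U where "U = (\<Union>i\<in>I. {x. f i x \<noteq> 0})"
  have U: "finite U" unfolding U_def using I fin by blast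
  have sub: "{x. (\<Sum>i\<in>I. f i x) \<noteq> 0} \<subseteq> U"
  proof
    fix x assume "x \<in> {x. (\<Sum>i\<in>I. f i x) \<noteq> 0}"
    then obtain i where "i \<in> I" "f i x \<noteq> 0" by (metis (mono_tags, lifting) mem_Collect_eq sum.neutral)
    then show "x \<in> U" unfolding U_def by blast
  qed
  show "finite {x. (\<Sum>i\<in>I. f i x) \<noteq> 0}" using finite_subset[OF sub U] .
  have "fsum (\<lambda>x. \<Sum>i\<in>I. f i x) = (\<Sum>x\<in>U. \<Sum>i\<in>I. f i x)"
    by (rule fsum_eq[OF U]) (use sub in blast)
  also have "\<dots> = (\<Sum>i\<in>I. \<Sum>x\<in>U. f i x)" by (rule sum.swap)
  also have "\<dots> = (\<Sum>i\<in>I. fsum (f i))"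
  proof (rule sum.cong[OF refl])
    fix i assume "i \<in> I"
    then show "(\<Sum>x\<in>U. f i x) = fsum (f i)" by (subst fsum_eq[OF U]) (auto simp: U_def)
  qed
  finally show "fsum (\<lambda>x. \<Sum>i\<in>I. f i x) = (\<Sum>i\<in>I. fsum (f i))" .
qed

lemma has_sum_finsum:
  fixes f :: "'i \<Rightarrow> 'a \<Rightarrow> complex"
  shows "finite I \<Longrightarrow> (\<And>i. i \<in> I \<Longrightarrow> (f i has_sum s i) A) \<Longrightarrow> ((\<lambda>x. \<Sum>i\<in>I. f i x) has_sum (\<Sum>i\<in>I. s i)) A"
proof (induction I rule: finite_induct)
  case empty then show ?case by simp
next
  case (insert a F)
  then have "((\<lambda>x. f a x + (\<Sum>i\<in>F. f i x)) has_sum (s a + (\<Sum>i\<in>F. s i))) A"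
    by (intro has_sum_add) auto
  then show ?case using insert by simp
qed

context aia begin

definition PS :: "('v \<Rightarrow> complex) \<Rightarrow> 'v \<Rightarrow> 'v \<Rightarrow> 'v \<Rightarrow> complex \<Rightarrow> complex \<Rightarrow> complex \<Rightarrow> complex \<times> complex \<Rightarrow> complex" where
  "PS phi x y u z1 z2 n = (\<lambda>(m, k). phi (md x m (wtproj Vh n (md y k u))) * cpw z1 (- m - 1) * cpw z2 (- k - 1))"
definition IS :: "('v \<Rightarrow> complex) \<Rightarrow> 'v \<Rightarrow> 'v \<Rightarrow> 'v \<Rightarrow> complex \<Rightarrow> complex \<Rightarrow> complex \<Rightarrow> complex \<times> complex \<Rightarrow> complex" where
  "IS phi x y u z1 z2 n = (\<lambda>(r, s). phi (md (wtproj Vh n (md x r y)) s u) * cpw (z1 - z2) (- r - 1) * cpw z2 (- s - 1))"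

lemma prod_PS: "prod_term Vh md phi x y u z1 z2 n = fsum (PS phi x y u z1 z2 n)"
  unfolding prod_term_def PS_def ..
lemma iter_IS: "iter_term Vh md phi x y u (z1 - z2) z2 n = fsum (IS phi x y u z1 z2 n)"
  unfolding iter_term_def IS_def ..

definition Good :: "('v \<Rightarrow> complex) \<Rightarrow> 'v \<Rightarrow> 'v \<Rightarrow> 'v \<Rightarrow> complex \<Rightarrow> complex \<Rightarrow> complex \<Rightarrow> bool" where
  "Good phi x y u z1 z2 A \<longleftrightarrow> (\<forall>n. finite {p. PS phi x y u z1 z2 n p \<noteq> 0} \<and> finite {p. IS phi x y u z1 z2 n p \<noteq> 0})
     \<and> (\<exists>S. ((\<lambda>n. fsum (IS phi x y u z1 z2 n)) has_sum A * S) UNIV \<and> ((\<lambda>n. fsum (PS phi x y u z1 z2 n)) has_sum S) UNIV)"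

lemma combine:
  assumes I: "finite I" and G: "\<And>i. i \<in> I \<Longrightarrow> Good (ph i) (xx i) (yy i) (uu i) z1 z2 A"
    and eP: "\<And>n p. PS phi x y u z1 z2 n p = (\<Sum>i\<in>I. PS (ph i) (xx i) (yy i) (uu i) z1 z2 n p)"
    and eI: "\<And>n p. IS phi x y u z1 z2 n p = (\<Sum>i\<in>I. IS (ph i) (xx i) (yy i) (uu i) z1 z2 n p)"
  shows "Good phi x y u z1 z2 A"
proof -
  have fP: "\<And>i n. i \<in> I \<Longrightarrow> finite {p. PS (ph i) (xx i) (yy i) (uu i) z1 z2 n p \<noteq> 0}"
   and fI: "\<And>i n. i \<in> I \<Longrightarrow> finite {p. IS (ph i) (xx i) (yy i) (uu i) z1 z2 n p \<noteq> 0}"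
    using G unfolding Good_def by blast+
  have "\<forall>i\<in>I. \<exists>S. ((\<lambda>n. fsum (IS (ph i) (xx i) (yy i) (uu i) z1 z2 n)) has_sum A * S) UNIV
      \<and> ((\<lambda>n. fsum (PS (ph i) (xx i) (yy i) (uu i) z1 z2 n)) has_sum S) UNIV"
    using G unfolding Good_def by blast
  then obtain S where S: "\<And>i. i \<in> I \<Longrightarrow> ((\<lambda>n. fsum (IS (ph i) (xx i) (yy i) (uu i) z1 z2 n)) has_sum A * S i) UNIV
      \<and> ((\<lambda>n. fsum (PS (ph i) (xx i) (yy i) (uu i) z1 z2 n)) has_sum S i) UNIV"
    by metis
  have PSf: "PS phi x y u z1 z2 n = (\<lambda>p. \<Sum>i\<in>I. PS (ph i) (xx i) (yy i) (uu i) z1 z2 n p)" for n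
    using eP by blast
  have ISf: "IS phi x y u z1 z2 n = (\<lambda>p. \<Sum>i\<in>I. IS (ph i) (xx i) (yy i) (uu i) z1 z2 n p)" for n
    using eI by blast
  have fin: "\<forall>n. finite {p. PS phi x y u z1 z2 n p \<noteq> 0} \<and> finite {p. IS phi x y u z1 z2 n p \<noteq> 0}"
  proof (intro allI conjI)
    fix n
    show "finite {p. PS phi x y u z1 z2 n p \<noteq> 0}" unfolding PSf by (rule fsum_sumI(2)[OF I fP])
    show "finite {p. IS phi x y u z1 z2 n p \<noteq> 0}" unfolding ISf by (rule fsum_sumI(2)[OF I fI])
  qed
  have fsP: "fsum (PS phi x y u z1 z2 n) = (\<Sum>i\<in>I. fsum (PS (ph i) (xx i) (yy i) (uu i) z1 z2 n))" for n
    unfolding PSf by (rule fsum_sumI(1)[OF I fP])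
  have fsI: "fsum (IS phi x y u z1 z2 n) = (\<Sum>i\<in>I. fsum (IS (ph i) (xx i) (yy i) (uu i) z1 z2 n))" for n
    unfolding ISf by (rule fsum_sumI(1)[OF I fI])
  have hP: "((\<lambda>n. fsum (PS phi x y u z1 z2 n)) has_sum (\<Sum>i\<in>I. S i)) UNIV"
    unfolding fsP by (rule has_sum_finsum[OF I]) (use S in blast)
  have hI: "((\<lambda>n. fsum (IS phi x y u z1 z2 n)) has_sum (\<Sum>i\<in>I. A * S i)) UNIV"
    unfolding fsI by (rule has_sum_finsum[OF I]) (use S in blast)
  have "(\<Sum>i\<in>I. A * S i) = A * (\<Sum>i\<in>I. S i)" by (simp add: sum_distrib_left)
  then show ?thesis unfolding Good_def using fin hP hI by metis
qed

end


context aia begin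

lemma wtproj_sum': "wtproj Vh n (sum f I) = (\<Sum>i\<in>I. wtproj Vh n (f i))" by (rule wtproj_sum)

lemma Good_u:
  assumes pa: "\<And>a b. phi (a + b) = phi a + phi b" and I: "finite I" and G: "\<And>i. i \<in> I \<Longrightarrow> Good phi x y (g i) z1 z2 A"
  shows "Good phi x y (sum g I) z1 z2 A"
proof (rule combine[OF I G])
  fix n p obtain m k :: complex where p: "p = (m, k)" by force
  show "PS phi x y (sum g I) z1 z2 n p = (\<Sum>i\<in>I. PS phi x y (g i) z1 z2 n p)"
    unfolding p PS_def by (simp add: md_sum1 md_sum3 wtproj_sum' add_sum[of phi, OF pa] sum_distrib_right)
  show "IS phi x y (sum g I) z1 z2 n p = (\<Sum>i\<in>I. IS phi x y (g i) z1 z2 n p)"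
    unfolding p IS_def by (simp add: md_sum1 md_sum3 wtproj_sum' add_sum[of phi, OF pa] sum_distrib_right)
qed

lemma Good_y:
  assumes pa: "\<And>a b. phi (a + b) = phi a + phi b" and I: "finite I" and G: "\<And>i. i \<in> I \<Longrightarrow> Good phi x (g i) u z1 z2 A"
  shows "Good phi x (sum g I) u z1 z2 A"
proof (rule combine[OF I G])
  fix n p obtain m k :: complex where p: "p = (m, k)" by force
  show "PS phi x (sum g I) u z1 z2 n p = (\<Sum>i\<in>I. PS phi x (g i) u z1 z2 n p)"
    unfolding p PS_def by (simp add: md_sum1 md_sum3 wtproj_sum' add_sum[of phi, OF pa] sum_distrib_right)
  show "IS phi x (sum g I) u z1 z2 n p = (\<Sum>i\<in>I. IS phi x (g i) u z1 z2 n p)"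
    unfolding p IS_def by (simp add: md_sum1 md_sum3 wtproj_sum' add_sum[of phi, OF pa] sum_distrib_right)
qed

lemma Good_x:
  assumes pa: "\<And>a b. phi (a + b) = phi a + phi b" and I: "finite I" and G: "\<And>i. i \<in> I \<Longrightarrow> Good phi (g i) y u z1 z2 A"
  shows "Good phi (sum g I) y u z1 z2 A"
proof (rule combine[OF I G])
  fix n p obtain m k :: complex where p: "p = (m, k)" by force
  show "PS phi (sum g I) y u z1 z2 n p = (\<Sum>i\<in>I. PS phi (g i) y u z1 z2 n p)"
    unfolding p PS_def by (simp add: md_sum1 md_sum3 wtproj_sum' add_sum[of phi, OF pa] sum_distrib_right)
  show "IS phi (sum g I) y u z1 z2 n p = (\<Sum>i\<in>I. IS phi (g i) y u z1 z2 n p)"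
    unfolding p IS_def by (simp add: md_sum1 md_sum3 wtproj_sum' add_sum[of phi, OF pa] sum_distrib_right)
qed

lemma Good_phi:
  assumes I: "finite I" and G: "\<And>i. i \<in> I \<Longrightarrow> Good (ph i) x y u z1 z2 A"
    and e: "\<And>z. phi z = (\<Sum>i\<in>I. ph i z)"
  shows "Good phi x y u z1 z2 A"
proof (rule combine[OF I G])
  fix n p obtain m k :: complex where p: "p = (m, k)" by force
  show "PS phi x y u z1 z2 n p = (\<Sum>i\<in>I. PS (ph i) x y u z1 z2 n p)"
    unfolding p PS_def by (simp add: e sum_distrib_right)
  show "IS phi x y u z1 z2 n p = (\<Sum>i\<in>I. IS (ph i) x y u z1 z2 n p)"
    unfolding p IS_def by (simp add: e sum_distrib_right)
qed

lemma dual_decomp: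
  assumes d: "graded_dual sc Vh v'"
  shows "v' z = (\<Sum>p\<in>{(a, n). \<exists>w\<in>Vh a n. v' w \<noteq> 0}. v' (cp z p))"
proof -
  let ?W = "{(a, n). \<exists>w\<in>Vh a n. v' w \<noteq> 0}"
  have add: "\<And>x y. v' (x + y) = v' x + v' y" and fW: "finite ?W" using d unfolding graded_dual_def by blast+
  let ?S = "{p. cp z p \<noteq> 0}"
  have "v' z = v' (sum (cp z) ?S)" by (rule arg_cong[OF cp_sum_eq])
  also have "\<dots> = (\<Sum>p\<in>?S. v' (cp z p))" by (rule add_sum[of v', OF add])
  also have "\<dots> = (\<Sum>p\<in>?S \<union> ?W. v' (cp z p))"
  proof (rule sum.mono_neutral_left)
    show "finite (?S \<union> ?W)" using cp_fin fW by blast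
    show "\<forall>p\<in>?S \<union> ?W - ?S. v' (cp z p) = 0"
    proof
      fix p assume "p \<in> ?S \<union> ?W - ?S"
      then have "cp z p = 0" by simp
      then show "v' (cp z p) = 0" using add[of 0 0] by simp
    qed
  qed simp
  also have "\<dots> = (\<Sum>p\<in>?W. v' (cp z p))"
  proof (rule sum.mono_neutral_right)
    show "finite (?S \<union> ?W)" using cp_fin fW by blast
    show "\<forall>p\<in>?S \<union> ?W - ?W. v' (cp z p) = 0"
    proof
      fix p assume "p \<in> ?S \<union> ?W - ?W"
      then have "p \<notin> ?W" by blast
      moreover have "cp z p \<in> Vh (fst p) (snd p)" by (rule cp_in)
      ultimately show "v' (cp z p) = 0" by (cases p) auto
    qed
  qed simp
  finally show ?thesis .
qed

end


context aia begin

lemma piece_good: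
  assumes x: "x \<in> Vh a1 n1" and y: "y \<in> Vh a2 n2" and u: "u \<in> Vh a3 n3"
    and pa: "\<And>a b. phi (a + b) = phi a + phi b" and ps: "\<And>c a. phi (sc c a) = c * phi a"
    and pw: "\<And>a n w. w \<in> Vh a n \<Longrightarrow> n \<noteq> n' \<Longrightarrow> phi w = 0"
    and zz: "cmod z1 > cmod z2" "cmod z2 > cmod (z1 - z2)" "cmod (z1 - z2) > 0"
  shows "Good phi x y u z1 z2 (Afac F Om z1 z2 a1 a2 a3)"
proof -
  obtain N12 where T12: "\<forall>k. md x k y \<noteq> 0 \<longrightarrow> (\<exists>j::nat. k = bh a1 a2 + of_int N12 - of_nat j)"
    using trunc_int[OF Vh_Vgr[OF x] Vh_Vgr[OF y]] by blast
  obtain N23 where T23: "\<forall>k. md y k u \<noteq> 0 \<longrightarrow> (\<exists>j::nat. k = bh a2 a3 + of_int N23 - of_nat j)"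
    using trunc_int[OF Vh_Vgr[OF y] Vh_Vgr[OF u]] by blast
  obtain N13 where T13: "\<forall>k. md x k u \<noteq> 0 \<longrightarrow> (\<exists>j::nat. k = bh a1 a3 + of_int N13 - of_nat j)"
    using trunc_int[OF Vh_Vgr[OF x] Vh_Vgr[OF u]] by blast
  interpret H: hom sc Vh md vac om F Om bh x y u a1 a2 a3 n1 n2 n3 n' phi N12 N23 N13 z1 z2
  proof (rule hom.intro[OF aia_axioms], rule hom_axioms.intro)
    show "x \<in> Vh a1 n1" "y \<in> Vh a2 n2" "u \<in> Vh a3 n3" by (fact x y u)+
    show "\<And>a b. phi (a + b) = phi a + phi b" by (fact pa)
    show "\<And>c a. phi (sc c a) = c * phi a" by (fact ps)
    show "\<And>a n w. w \<in> Vh a n \<Longrightarrow> n \<noteq> n' \<Longrightarrow> phi w = 0" by (fact pw)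
    show "\<And>k. md x k y \<noteq> 0 \<Longrightarrow> \<exists>j::nat. k = bh a1 a2 + of_int N12 - of_nat j" using T12 by blast
    show "\<And>k. md y k u \<noteq> 0 \<Longrightarrow> \<exists>j::nat. k = bh a2 a3 + of_int N23 - of_nat j" using T23 by blast
    show "\<And>k. md x k u \<noteq> 0 \<Longrightarrow> \<exists>j::nat. k = bh a1 a3 + of_int N13 - of_nat j" using T13 by blast
    show "cmod z1 > cmod z2" "cmod z2 > cmod (z1 - z2)" "cmod (z1 - z2) > 0" by (fact zz)+
  qed
  have e1: "(\<lambda>n. fsum (IS phi x y u z1 z2 n)) = iter_term Vh md phi x y u (z1 - z2) z2"
    by (rule ext) (simp add: iter_IS)
  have e2: "(\<lambda>n. fsum (PS phi x y u z1 z2 n)) = prod_term Vh md phi x y u z1 z2"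
    by (rule ext) (simp add: prod_PS)
  show ?thesis unfolding Good_def e1 e2
  proof (intro conjI allI)
    fix n
    show "finite {p. PS phi x y u z1 z2 n p \<noteq> 0}" unfolding PS_def by (rule H.prod_supp)
    show "finite {p. IS phi x y u z1 z2 n p \<noteq> 0}" unfolding IS_def by (rule H.iter_supp)
  next
    show "\<exists>S. (iter_term Vh md phi x y u (z1 - z2) z2 has_sum Afac F Om z1 z2 a1 a2 a3 * S) UNIV
      \<and> (prod_term Vh md phi x y u z1 z2 has_sum S) UNIV"
      using H.hom_main by blast
  qed
qed

lemma main_good:
  assumes v1: "v1 \<in> Vgr sc Vh a1" and v2: "v2 \<in> Vgr sc Vh a2" and v3: "v3 \<in> Vgr sc Vh a3"
    and d: "graded_dual sc Vh v'"
    and zz: "cmod z1 > cmod z2" "cmod z2 > cmod (z1 - z2)" "cmod (z1 - z2) > 0"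
  shows "Good v' v1 v2 v3 z1 z2 (Afac F Om z1 z2 a1 a2 a3)"
proof -
  let ?A = "Afac F Om z1 z2 a1 a2 a3"
  obtain N1 where N1: "finite N1" "v1 = (\<Sum>n\<in>N1. cp v1 (a1, n))" using Vgr_decomp[OF v1] by blast
  obtain N2 where N2: "finite N2" "v2 = (\<Sum>n\<in>N2. cp v2 (a2, n))" using Vgr_decomp[OF v2] by blast
  obtain N3 where N3: "finite N3" "v3 = (\<Sum>n\<in>N3. cp v3 (a3, n))" using Vgr_decomp[OF v3] by blast
  let ?W = "{(a, n). \<exists>w\<in>Vh a n. v' w \<noteq> 0}"
  have add: "\<And>x y. v' (x + y) = v' x + v' y" and scl: "\<And>c x. v' (sc c x) = c * v' x"
    and fW: "finite ?W" using d unfolding graded_dual_def by blast+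
  have v0: "v' 0 = 0" using add[of 0 0] by simp
  define ph where "ph p z = v' (cp z p)" for p z
  have pha: "\<And>a b. ph p (a + b) = ph p a + ph p b" for p by (simp add: ph_def cp_add add)
  have phs: "\<And>c a. ph p (sc c a) = c * ph p a" for p by (simp add: ph_def cp_sc scl)
  have phw: "\<And>a n w. w \<in> Vh a n \<Longrightarrow> n \<noteq> snd p \<Longrightarrow> ph p w = 0" for p
  proof -
    fix a n w assume "w \<in> Vh a n" "n \<noteq> snd p"
    then show "ph p w = 0" by (auto simp: ph_def cp_hom v0)
  qed
  have G1: "Good (ph p) (cp v1 (a1, n1)) (cp v2 (a2, n2)) (cp v3 (a3, n3)) z1 z2 ?A" for p n1 n2 n3
    by (rule piece_good[OF _ _ _ pha phs phw zz]) (use cp_in in fastforce)+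
  have G2: "Good (ph p) (cp v1 (a1, n1)) (cp v2 (a2, n2)) v3 z1 z2 ?A" for p n1 n2
    by (subst N3(2), rule Good_u[OF pha N3(1) G1])
  have G3: "Good (ph p) (cp v1 (a1, n1)) v2 v3 z1 z2 ?A" for p n1
    by (subst N2(2), rule Good_y[OF pha N2(1) G2])
  have G4: "Good (ph p) v1 v2 v3 z1 z2 ?A" for p
    by (subst N1(2), rule Good_x[OF pha N1(1) G3])
  show ?thesis
    by (rule Good_phi[OF fW G4]) (unfold ph_def, rule dual_decomp[OF d])
qed

end

theorem final:
  fixes sc :: "complex \<Rightarrow> 'v::ab_group_add \<Rightarrow> 'v"
    and Vh :: "'a::ab_group_add \<Rightarrow> complex \<Rightarrow> 'v set"
    and md :: "'v \<Rightarrow> complex \<Rightarrow> 'v \<Rightarrow> 'v"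
    and vac om :: 'v
    and F :: "'a \<Rightarrow> 'a \<Rightarrow> 'a \<Rightarrow> complex" and Om bh :: "'a \<Rightarrow> 'a \<Rightarrow> complex"
    and z1 z2 :: complex and a1 a2 a3 :: 'a and v1 v2 v3 :: 'v and v' :: "'v \<Rightarrow> complex"
  assumes "AIA sc Vh md vac om F Om bh"
    and "cmod z1 > cmod z2" and "cmod z2 > cmod (z1 - z2)" and "cmod (z1 - z2) > 0"
    and "v1 \<in> Vgr sc Vh a1" and "v2 \<in> Vgr sc Vh a2" and "v3 \<in> Vgr sc Vh a3"
    and "graded_dual sc Vh v'"
  shows "iter_term Vh md v' v1 v2 v3 (z1 - z2) z2 summable_on UNIV
       \<and> prod_term Vh md v' v1 v2 v3 z1 z2 summable_on UNIV
       \<and> (\<Sum>\<^sub>\<infinity>n. iter_term Vh md v' v1 v2 v3 (z1 - z2) z2 n)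
           = Afac F Om z1 z2 a1 a2 a3 * (\<Sum>\<^sub>\<infinity>n. prod_term Vh md v' v1 v2 v3 z1 z2 n)"
proof -
  interpret A: aia sc Vh md vac om F Om bh by (rule aia.intro) (fact assms(1))
  have G: "A.Good v' v1 v2 v3 z1 z2 (Afac F Om z1 z2 a1 a2 a3)"
    by (rule A.main_good) (fact assms)+
  then obtain S where
    hI: "((\<lambda>n. fsum (A.IS v' v1 v2 v3 z1 z2 n)) has_sum Afac F Om z1 z2 a1 a2 a3 * S) UNIV" and
    hP: "((\<lambda>n. fsum (A.PS v' v1 v2 v3 z1 z2 n)) has_sum S) UNIV"
    unfolding A.Good_def by blast
  have e1: "(\<lambda>n. fsum (A.IS v' v1 v2 v3 z1 z2 n)) = iter_term Vh md v' v1 v2 v3 (z1 - z2) z2"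
    by (rule ext) (simp add: A.iter_IS)
  have e2: "(\<lambda>n. fsum (A.PS v' v1 v2 v3 z1 z2 n)) = prod_term Vh md v' v1 v2 v3 z1 z2"
    by (rule ext) (simp add: A.prod_PS)
  from hI hP show ?thesis unfolding e1 e2
    by (auto simp: summable_on_def infsumI)
qed

theorem mainTheorem15:
  fixes sc :: "complex \<Rightarrow> 'v::ab_group_add \<Rightarrow> 'v"
    and Vh :: "'a::ab_group_add \<Rightarrow> complex \<Rightarrow> 'v set"
    and md :: "'v \<Rightarrow> complex \<Rightarrow> 'v \<Rightarrow> 'v"
    and vac om :: 'v
    and F :: "'a \<Rightarrow> 'a \<Rightarrow> 'a \<Rightarrow> complex" and Om bh :: "'a \<Rightarrow> 'a \<Rightarrow> complex"
    and z1 z2 :: complex and a1 a2 a3 :: 'a and v1 v2 v3 :: 'v and v' :: "'v \<Rightarrow> complex"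
  assumes "AIA sc Vh md vac om F Om bh"
    and "cmod z1 > cmod z2" and "cmod z2 > cmod (z1 - z2)" and "cmod (z1 - z2) > 0"
    and "v1 \<in> Vgr sc Vh a1" and "v2 \<in> Vgr sc Vh a2" and "v3 \<in> Vgr sc Vh a3"
    and "graded_dual sc Vh v'"
  shows "iter_term Vh md v' v1 v2 v3 (z1 - z2) z2 summable_on UNIV
       \<and> prod_term Vh md v' v1 v2 v3 z1 z2 summable_on UNIV
       \<and> (\<Sum>\<^sub>\<infinity>n. iter_term Vh md v' v1 v2 v3 (z1 - z2) z2 n)
           = Afac F Om z1 z2 a1 a2 a3 * (\<Sum>\<^sub>\<infinity>n. prod_term Vh md v' v1 v2 v3 z1 z2 n)"
  by (rule final) (fact assms)+

end
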